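(* Let $(\sigma_k)_{k\ge1}$ be a random arrangement of $\mathbb{N}$ such that for every $k$ and $\alpha\in\mathfrak{S}_k$, $\mathbb{P}(\sigma_k=\alpha)$ depends only on $Q(\alpha)$. Then the random path $(\rho(\sigma_k))_{k\ge1}$ on $\mathcal{Y}$ is harmonic, i.e. for every partition $\tau$ of $n$ and standard tableaux $P_1,P_2$ of shape $\tau$, $\mathbb{P}((\rho(\sigma_1),\dots,\rho(\sigma_n))=P_1)=\mathbb{P}((\rho(\sigma_1),\dots,\rho(\sigma_n))=P_2)$. In particular this holds for every random arrangement such that $\mathbb{P}(\sigma_k=\alpha)$ depends only on $des(\alpha)$ (i.e. every random arrangement coming from a harmonic measure on $\mathcal{Z}$).
   Context: Permutations are written as words; $des(\alpha)=\{i:\alpha(i+1)<\alpha(i)\}$. For $\sigma\in\mathfrak{S}_k$, $\sigma_\downarrow\in\mathfrak{S}_{k-1}$ erases the letter $k$. An arrangement of $\mathbb{N}$ is a sequence $(\sigma_k)_{k\ge1}$ with $\sigma_k\in\mathfrak{S}_k$, $(\sigma_k)_\downarrow=\sigma_{k-1}$. $P(\sigma),Q(\sigma)$ are the Robinson–Schensted insertion and recording tableaux, $\rho(\sigma)$ their common shape. The Young graph $\mathcal{Y}$ has partitions as vertices, $\rho\nearrow\tau$ iff $\tau$ is $\rho$ plus one cell; a path from $\emptyset$ of length $n$ is identified with the standard tableau whose cell added at step $i$ contains $i$. For an arrangement, $(\rho(\sigma_k))_k$ is a path in $\mathcal{Y}$. *)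

theory Defs
  imports "HOL-Probability.Probability" "HOL-Combinatorics.Multiset_Permutations"
begin

text \<open>Permutations in S_k are words: lists in permutations_of_set {1..k}.\<close>

definition des :: "nat list \<Rightarrow> nat set" where
  "des \<alpha> = {i. 1 \<le> i \<and> i < length \<alpha> \<and> \<alpha> ! i < \<alpha> ! (i - 1)}"
  (* 1-indexed: i is a descent iff alpha(i+1) < alpha(i); alpha(j) = alpha ! (j - 1) *)

definition erase_max :: "nat \<Rightarrow> nat list \<Rightarrow> nat list" where
  "erase_max k \<alpha> = filter (\<lambda>x. x \<noteq> k) \<alpha>"

definition arrangement :: "(nat \<Rightarrow> nat list) \<Rightarrow> bool" where
  "arrangement s \<longleftrightarrow>
     (\<forall>k\<ge>1. s k \<in> permutations_of_set {1..k}) \<and>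
     (\<forall>k\<ge>2. erase_max k (s k) = s (k - 1))"

text \<open>Tableaux are lists of rows (English convention); row insertion (Schensted bumping).\<close>

fun row_insert :: "nat \<Rightarrow> nat list \<Rightarrow> nat list \<times> nat option" where
  "row_insert x [] = ([x], None)"
| "row_insert x (y # ys) =
     (if x < y then (x # ys, Some y)
      else (case row_insert x ys of (r, b) \<Rightarrow> (y # r, b)))"

text \<open>Insert x into tableau; returns new tableau and the (0-based) row of the new cell.\<close>
fun rs_insert :: "nat \<Rightarrow> nat list list \<Rightarrow> nat list list \<times> nat" where
  "rs_insert x [] = ([[x]], 0)"
| "rs_insert x (r # rs) =
     (case row_insert x r of
        (r', None) \<Rightarrow> (r' # rs, 0)
      | (r', Some y) \<Rightarrow> (case rs_insert y rs of (rs', i) \<Rightarrow> (r' # rs', Suc i)))"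

definition add_to_row :: "nat \<Rightarrow> nat \<Rightarrow> nat list list \<Rightarrow> nat list list" where
  "add_to_row j i T = (if i < length T then T[i := T ! i @ [j]] else T @ [[j]])"

definition RS :: "nat list \<Rightarrow> nat list list \<times> nat list list" where
  "RS w = (case fold (\<lambda>x (P, Q, j).
                 (case rs_insert x P of (P', i) \<Rightarrow> (P', add_to_row (Suc j) i Q, Suc j)))
              w ([], [], 0) of (P, Q, _) \<Rightarrow> (P, Q))"

definition RS_P :: "nat list \<Rightarrow> nat list list" where "RS_P w = fst (RS w)"
definition RS_Q :: "nat list \<Rightarrow> nat list list" where "RS_Q w = snd (RS w)"

definition rho :: "nat list \<Rightarrow> nat list" where
  "rho w = map length (RS_P w)"

definition is_partition_of :: "nat \<Rightarrow> nat list \<Rightarrow> bool" where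
  "is_partition_of n \<tau> \<longleftrightarrow> sorted_wrt (\<ge>) \<tau> \<and> (\<forall>l\<in>set \<tau>. 0 < l) \<and> sum_list \<tau> = n"

definition standard_tableau :: "nat list \<Rightarrow> nat list list \<Rightarrow> bool" where
  "standard_tableau \<tau> T \<longleftrightarrow>
     map length T = \<tau> \<and>
     concat T \<in> permutations_of_set {1..sum_list \<tau>} \<and>
     (\<forall>r\<in>set T. sorted_wrt (<) r) \<and>
     (\<forall>i j. Suc i < length T \<and> j < length (T ! Suc i) \<longrightarrow> T ! i ! j < T ! Suc i ! j)"

text \<open>Path in the Young graph associated to a standard tableau: its i-th vertex is the
  shape formed by the entries \<le> i.\<close>
definition tableau_vertex :: "nat list list \<Rightarrow> nat \<Rightarrow> nat list" where
  "tableau_vertex T i = filter (\<lambda>l. 0 < l) (map (\<lambda>r. length (filter (\<lambda>x. x \<le> i) r)) T)"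

end

theory Submission
  imports Defs
begin


lemma row_insert_None:
  "row_insert x r = (r', None) \<Longrightarrow> r' = r @ [x] \<and> (\<forall>z\<in>set r. \<not> x < z)"
  by (induction x r arbitrary: r' rule: row_insert.induct) (auto split: if_splits prod.splits)

lemma row_insert_Some:
  "row_insert x r = (r', Some z) \<Longrightarrow>
     \<exists>j<length r. r!j = z \<and> x < z \<and> r' = r[j:=x] \<and> (\<forall>q<j. \<not> x < r!q)"
proof (induction x r arbitrary: r' rule: row_insert.induct)
  case (1 x) then show ?case by simp
next
  case (2 x y ys)
  show ?case
  proof (cases "x < y")
    case True then show ?thesis using 2(2) by (intro exI[of _ 0]) auto
  next
    case False
    obtain r b where rb: "row_insert x ys = (r, b)" by fastforce
    with 2(2) False have "b = Some z" "r' = y # r" by auto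
    from 2(1)[OF False rb[unfolded \<open>b = Some z\<close>]] obtain j where
      "j<length ys" "ys!j = z" "x < z" "r = ys[j:=x]" "\<forall>q<j. \<not> x < ys!q" by blast
    then show ?thesis using \<open>r' = y # r\<close> False
      by (intro exI[of _ "Suc j"]) (auto simp: nth_Cons split: nat.splits)
  qed
qed

lemma row_insert_app:
  "\<forall>z\<in>set a. \<not> x < z \<Longrightarrow> row_insert x (a @ b) = (case row_insert x b of (r, c) \<Rightarrow> (a @ r, c))"
  by (induction a) (auto split: prod.splits)

lemma row_insert_app_Some:
  "row_insert x a = (a', Some y) \<Longrightarrow> row_insert x (a @ b) = (a' @ b, Some y)"
  by (induction x a arbitrary: a' rule: row_insert.induct) (auto split: if_splits prod.splits)

lemma row_insert_set: "set (fst (row_insert x r)) \<subseteq> insert x (set r)"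
  by (induction x r rule: row_insert.induct) (auto split: prod.splits)

lemma row_insert_sorted:
  "sorted_wrt (<) r \<Longrightarrow> x \<notin> set r \<Longrightarrow> sorted_wrt (<) (fst (row_insert x r))"
proof (induction x r rule: row_insert.induct)
  case (1 x) then show ?case by simp
next
  case (2 x y ys)
  show ?case
  proof (cases "x < y")
    case True then show ?thesis using 2 by auto
  next
    case False
    then have "y < x" using 2(3) by auto
    obtain r b where rb: "row_insert x ys = (r, b)" by fastforce
    have "sorted_wrt (<) r" using 2 False rb by auto
    moreover have "set r \<subseteq> insert x (set ys)" using row_insert_set[of x ys] rb by auto
    ultimately show ?thesis using False rb \<open>y < x\<close> 2(2) by auto
  qed
qed

lemma row_insert_mset:
  "row_insert x r = (r', b) \<Longrightarrow>
     mset r' + (case b of None \<Rightarrow> {#} | Some y \<Rightarrow> {#y#}) = add_mset x (mset r)"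
  by (induction x r arbitrary: r' b rule: row_insert.induct) (auto split: if_splits prod.splits)

lemma row_insert_length: "row_insert x r = (r', Some y) \<Longrightarrow> length r' = length r"
  by (induction x r arbitrary: r' rule: row_insert.induct) (auto split: if_splits prod.splits)

definition domr :: "nat list \<Rightarrow> nat list \<Rightarrow> bool" where
  "domr r s \<longleftrightarrow> length s \<le> length r \<and> (\<forall>q<length s. r!q < s!q)"

definition tab :: "nat list list \<Rightarrow> bool" where
  "tab T \<longleftrightarrow> (\<forall>r\<in>set T. r \<noteq> [] \<and> sorted_wrt (<) r) \<and> (\<forall>i. Suc i < length T \<longrightarrow> domr (T!i) (T!Suc i))"

lemma tab_Nil[simp]: "tab []" by (simp add: tab_def)

lemma tab_Cons: "tab (r # rs) \<longleftrightarrow> r \<noteq> [] \<and> sorted_wrt (<) r \<and> tab rs \<and> (rs \<noteq> [] \<longrightarrow> domr r (hd rs))"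
  by (auto simp: tab_def nth_Cons hd_conv_nth split: nat.splits)




lemma dom_step:
  assumes sr: "sorted_wrt (<) r" and ss: "sorted_wrt (<) s" and d: "domr r s"
    and ri: "row_insert x r = (r', Some y)" and xr: "x \<notin> set r" and ys: "y \<notin> set s"
    and si: "row_insert y s = (s', b)"
  shows "domr r' s'"
proof -
  from row_insert_Some[OF ri] obtain j where j: "j<length r" "r!j = y" "x < y" "r' = r[j:=x]"
    "\<forall>q<j. \<not> x < r!q" by blast
  have rq: "\<And>q. q < j \<Longrightarrow> r!q < x" using j xr sr by (metis linorder_neqE_nat nth_mem order.strict_trans)
  have rless: "\<And>q. q < j \<Longrightarrow> r!q < y" using rq j by (meson order.strict_trans)
  have r'le: "\<And>q. q < length r \<Longrightarrow> r'!q \<le> r!q" using j by (auto simp: nth_list_update)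
  have r'y: "\<And>q. q \<le> j \<Longrightarrow> r'!q < y" using j rless by (auto simp: nth_list_update le_less)
  show ?thesis
  proof (cases b)
    case None
    from row_insert_None[OF si[unfolded None]] have s': "s' = s @ [y]" "\<forall>z\<in>set s. \<not> y < z" by auto
    have "length s \<le> j"
    proof (rule ccontr)
      assume "\<not> length s \<le> j"
      then have "r!j < s!j" using d by (auto simp: domr_def)
      then show False using s' j by (metis \<open>\<not> length s \<le> j\<close> not_le nth_mem)
    qed
    then show ?thesis using d s' j r'le r'y
      by (auto simp: domr_def nth_append less_Suc_eq)
  next
    case (Some z)
    from row_insert_Some[OF si[unfolded Some]] obtain j' where j': "j'<length s" "s!j' = z" "y < z"
      "s' = s[j':=y]" "\<forall>q<j'. \<not> y < s!q" by blast
    have "j' \<le> j"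
    proof (rule ccontr)
      assume "\<not> j' \<le> j"
      then have "j < length s" using j' by auto
      then have "y < s!j" using d j by (auto simp: domr_def)
      then show False using j' \<open>\<not> j' \<le> j\<close> by auto
    qed
    show ?thesis using d j' j r'le r'y \<open>j' \<le> j\<close>
      by (auto simp: domr_def nth_list_update)
  qed
qed

lemma rs_insert_snd_le: "snd (rs_insert x T) \<le> length T"
  by (induction x T rule: rs_insert.induct) (auto split: prod.splits option.splits)

lemma rs_insert_mset: "mset (concat (fst (rs_insert x T))) = add_mset x (mset (concat T))"
proof (induction x T rule: rs_insert.induct)
  case (1 x) then show ?case by simp
next
  case (2 x r rs)
  obtain r' b where rb: "row_insert x r = (r', b)" by fastforce
  note m = row_insert_mset[OF rb]
  show ?case
  proof (cases b)
    case None then show ?thesis using rb m by simp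
  next
    case (Some y)
    obtain rs' i where ri: "rs_insert y rs = (rs', i)" by fastforce
    have "mset (concat rs') = add_mset y (mset (concat rs))" using 2[OF rb[symmetric] Some] ri by simp
    then show ?thesis using rb m Some ri by simp
  qed
qed

definition addcell :: "nat \<Rightarrow> nat list \<Rightarrow> nat list" where
  "addcell i l = (if i < length l then l[i := Suc (l!i)] else l @ [1])"

lemma rs_insert_shape: "map length (fst (rs_insert x T)) = addcell (snd (rs_insert x T)) (map length T)"
proof (induction x T rule: rs_insert.induct)
  case (1 x) then show ?case by (simp add: addcell_def)
next
  case (2 x r rs)
  obtain r' b where rb: "row_insert x r = (r', b)" by fastforce
  show ?case
  proof (cases b)
    case None then show ?thesis using rb row_insert_None[OF rb[unfolded None]] by (simp add: addcell_def)
  next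
    case (Some y)
    obtain rs' i where ri: "rs_insert y rs = (rs', i)" by fastforce
    have ih: "map length rs' = addcell i (map length rs)" using 2[OF rb[symmetric] Some] ri by simp
    have "i \<le> length rs" using rs_insert_snd_le[of y rs] ri by simp
    then show ?thesis using rb Some ri ih row_insert_length[OF rb[unfolded Some]]
      by (auto simp: addcell_def map_update)
  qed
qed

lemma distinct_concat_Cons: "distinct (concat (r # rs)) \<longleftrightarrow> distinct r \<and> distinct (concat rs) \<and> set r \<inter> set (concat rs) = {}"
  by simp

lemma rs_insert_tab:
  "tab T \<Longrightarrow> distinct (concat T) \<Longrightarrow> x \<notin> set (concat T) \<Longrightarrow> tab (fst (rs_insert x T))"
proof (induction x T rule: rs_insert.induct)
  case (1 x) then show ?case by (simp add: tab_Cons)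
next
  case (2 x r rs)
  obtain r' b where rb: "row_insert x r = (r', b)" by fastforce
  have sr: "sorted_wrt (<) r" "r \<noteq> []" "tab rs" and hd: "rs \<noteq> [] \<Longrightarrow> domr r (hd rs)"
    using 2(2) by (auto simp: tab_Cons)
  have xr: "x \<notin> set r" using 2(4) by auto
  have sr': "sorted_wrt (<) r'" using row_insert_sorted[OF sr(1) xr] rb by simp
  show ?case
  proof (cases b)
    case None
    note N = row_insert_None[OF rb[unfolded None]]
    have "rs \<noteq> [] \<Longrightarrow> domr r' (hd rs)" using hd N by (auto simp: domr_def nth_append)
    then show ?thesis using rb None sr sr' N by (auto simp: tab_Cons)
  next
    case (Some y)
    obtain rs' i where ri: "rs_insert y rs = (rs', i)" by fastforce
    from row_insert_Some[OF rb[unfolded Some]] obtain j where "j < length r" "r!j = y" by blast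
    then have yr: "y \<in> set r" by auto
    have yrs: "y \<notin> set (concat rs)" using yr 2(3) by auto
    have ih: "tab rs'" using 2(1)[OF rb[symmetric] Some sr(3)] 2(3) yrs ri by simp
    have "domr r' (hd rs')"
    proof (cases rs)
      case Nil
      then have "rs' = [[y]]" using ri by simp
      moreover have "domr r' [y]"
        using dom_step[OF sr(1) _ _ rb[unfolded Some] xr, of "[]" "[y]" None] by (simp add: domr_def)
      ultimately show ?thesis by simp
    next
      case (Cons s rest)
      obtain s' c where sc: "row_insert y s = (s', c)" by fastforce
      have "hd rs' = s'" using ri sc Cons by (auto split: option.splits prod.splits)
      moreover have "domr r' s'"
        apply (rule dom_step[OF sr(1) _ _ rb[unfolded Some] xr _ sc])
        using 2(2) Cons yrs by (auto simp: tab_Cons)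
      ultimately show ?thesis by simp
    qed
    then show ?thesis using rb Some ri ih sr' row_insert_length[OF rb[unfolded Some]] sr(2)
      by (auto simp: tab_Cons)
  qed
qed




definition unrow :: "nat \<Rightarrow> nat list \<Rightarrow> nat list \<times> nat" where
  "unrow y r' = (butlast (takeWhile (\<lambda>z. z < y) r') @ [y] @ dropWhile (\<lambda>z. z < y) r',
                 last (takeWhile (\<lambda>z. z < y) r'))"

lemma sorted_dropWhile_gt:
  fixes xs :: "nat list"
  assumes "sorted_wrt (<) xs" "y \<notin> set xs" "z \<in> set (dropWhile (\<lambda>z. z < y) xs)"
  shows "y < z"
proof -
  have s: "sorted_wrt (<) (dropWhile (\<lambda>z. z < y) xs)"
    using assms(1) by (metis sorted_wrt_append takeWhile_dropWhile_id)
  obtain w ws where ww: "dropWhile (\<lambda>z. z < y) xs = w # ws" using assms(3) by (cases "dropWhile (\<lambda>z. z < y) xs") auto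
  have "\<not> w < y" using ww by (metis dropWhile_eq_Cons_conv)
  moreover have "w \<noteq> y" using ww assms(2) by (metis list.set_intros(1) set_dropWhileD)
  ultimately have "y < w" by auto
  then show ?thesis using s ww assms(3) by auto
qed

lemma unrow_correct:
  assumes sr: "sorted_wrt (<) r'" and yr: "y \<notin> set r'" and z: "z \<in> set r'" "z < y"
    and u: "unrow y r' = (r, x)"
  shows "row_insert x r = (r', Some y) \<and> sorted_wrt (<) r \<and> x \<in> set r' \<and> x < y
     \<and> (\<exists>j<length r'. r'!j = x \<and> r = r'[j:=y] \<and> (\<forall>q<length r'. r'!q < y \<longrightarrow> q \<le> j))"
proof -
  define a where "a = takeWhile (\<lambda>z. z < y) r'"
  define b where "b = dropWhile (\<lambda>z. z < y) r'"
  have ab: "r' = a @ b" by (simp add: a_def b_def)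
  have sa: "sorted_wrt (<) a" and sb: "sorted_wrt (<) b" and sab: "\<forall>u\<in>set a. \<forall>v\<in>set b. u < v"
    using sr ab by (metis sorted_wrt_append)+
  have ay: "\<forall>u\<in>set a. u < y" by (auto simp: a_def dest: set_takeWhileD)
  have by': "\<forall>v\<in>set b. y < v" using sorted_dropWhile_gt[OF sr yr] by (auto simp: b_def)
  have "a \<noteq> []"
  proof
    assume "a = []"
    then have "z \<in> set b" using z ab by auto
    then show False using by' z by auto
  qed
  then have a_split: "a = butlast a @ [last a]" by simp
  have rx: "r = butlast a @ [y] @ b" "x = last a" using u by (auto simp: unrow_def a_def b_def)
  have xa: "x \<in> set a" using rx \<open>a \<noteq> []\<close> by auto
  have xy: "x < y" using xa ay by auto
  have bl: "\<forall>u\<in>set (butlast a). u < x"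
    using sa a_split rx(2) by (metis sorted_wrt_append list.set_intros(1) set_ConsD empty_iff set_simps(1))
  have bl': "\<forall>u\<in>set (butlast a). \<not> x < u" using bl by auto
  have "row_insert x r = (butlast a @ x # b, Some y)"
    using row_insert_app[OF bl', of "[y] @ b"] xy rx by auto
  also have "butlast a @ x # b = r'" using ab a_split rx by (metis append.assoc append_Cons append_Nil)
  finally have ri: "row_insert x r = (r', Some y)" .
  have sbl: "sorted_wrt (<) (butlast a)" using sa a_split by (metis sorted_wrt_append)
  have srr: "sorted_wrt (<) r" using rx sbl sb by' bl xy
    by (auto simp: sorted_wrt_append) (meson order.strict_trans)
  define j where "j = length a - 1"
  have la: "length a > 0" using \<open>a \<noteq> []\<close> by simp
  have j1: "j < length r'" using la ab unfolding j_def by (metis diff_less length_append less_numeral_extra(1) trans_less_add1)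
  have j: "j < length r'" "r'!j = x" using j1 ab la rx by (auto simp: j_def nth_append last_conv_nth)
  have "r'[j:=y] = butlast a @ [y] @ b"
  proof -
    have "r'[j:=y] = a[j:=y] @ b" using ab \<open>a \<noteq> []\<close> by (simp add: j_def list_update_append)
    also have "a[j:=y] = butlast a @ [y]" using a_split j_def
      by (metis length_butlast list_update_length)
    finally show ?thesis by simp
  qed
  then have rj: "r = r'[j:=y]" using rx by simp
  have "\<forall>q<length r'. r'!q < y \<longrightarrow> q \<le> j"
  proof (intro allI impI)
    fix q assume "q < length r'" "r'!q < y"
    show "q \<le> j"
    proof (rule ccontr)
      assume "\<not> q \<le> j"
      then have "q \<ge> length a" by (simp add: j_def)
      then have "r'!q \<in> set b" using ab \<open>q < length r'\<close> by (simp add: nth_append)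
      then show False using by' \<open>r'!q < y\<close> by auto
    qed
  qed
  then show ?thesis using ri srr xa ab xy j rj by auto
qed

fun unrs :: "nat list list \<Rightarrow> nat \<Rightarrow> nat list list \<times> nat" where
  "unrs [] i = ([], 0)"
| "unrs (r # rs) 0 = (if butlast r = [] then rs else butlast r # rs, last r)"
| "unrs (r # rs) (Suc i) = (case unrs rs i of (rs0, y) \<Rightarrow> (case unrow y r of (r0, x) \<Rightarrow> (r0 # rs0, x)))"

lemma sorted_wrt_butlast': "sorted_wrt P xs \<Longrightarrow> sorted_wrt P (butlast xs)"
  by (metis append_butlast_last_id butlast.simps(1) sorted_wrt_append)

lemma unrs_correct:
  "tab T' \<Longrightarrow> distinct (concat T') \<Longrightarrow> i < length T' \<Longrightarrow>
   (Suc i < length T' \<longrightarrow> length (T'!Suc i) < length (T'!i)) \<Longrightarrow> unrs T' i = (T, x) \<Longrightarrow>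
   rs_insert x T = (T', i) \<and> tab T \<and> mset (concat T') = add_mset x (mset (concat T)) \<and> x \<in> set (hd T')
   \<and> (T \<noteq> [] \<longrightarrow> length (hd T) \<le> length (hd T') \<and>
        (\<forall>q<length (hd T). hd T'!q \<le> hd T!q \<and> (x \<le> hd T'!q \<longrightarrow> x < hd T!q)))"
proof (induction T' i arbitrary: T x rule: unrs.induct)
  case (1 i) then show ?case by simp
next
  case (2 r' rs')
  have tr: "r' \<noteq> []" "sorted_wrt (<) r'" "tab rs'" "rs' \<noteq> [] \<Longrightarrow> domr r' (hd rs')"
    using 2(1) by (auto simp: tab_Cons)
  have x: "x = last r'" using 2(5) by (simp split: if_splits)
  have rlast: "r' = butlast r' @ [x]" using tr x by simp
  have bl: "\<forall>u\<in>set (butlast r'). u < x" using tr(2) rlast by (metis sorted_wrt_append list.set_intros(1))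
  show ?case
  proof (cases "butlast r' = []")
    case True
    then have r1: "r' = [x]" using rlast by simp
    have "rs' = []"
    proof (rule ccontr)
      assume "rs' \<noteq> []"
      then have "length (hd rs') < 1" using 2(4) r1 by (auto simp: hd_conv_nth)
      then show False using tr(3) \<open>rs' \<noteq> []\<close> by (auto simp: tab_def)
    qed
    then show ?thesis using 2(5) True r1 by simp
  next
    case False
    then have T: "T = butlast r' # rs'" using 2(5) by simp
    have bl': "\<forall>u\<in>set (butlast r'). \<not> x < u" using bl by auto
    have ri: "row_insert x (butlast r') = (r', None)"
      using row_insert_app[OF bl', of "[]"] rlast by auto
    have "rs' \<noteq> [] \<Longrightarrow> domr (butlast r') (hd rs')"
      using tr(4) 2(4) by (auto simp: domr_def nth_butlast hd_conv_nth)
    then have tabT: "tab T" using T False tr sorted_wrt_butlast'[OF tr(2)] by (auto simp: tab_Cons)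
    have m: "mset r' = add_mset x (mset (butlast r'))" using rlast by (metis mset_append add_mset_add_single mset.simps union_commute add.right_neutral mset.simps(1) add_mset_add_single)
    have u: "\<forall>q<length (butlast r'). r'!q \<le> butlast r'!q \<and> (x \<le> r'!q \<longrightarrow> x < butlast r'!q)"
    proof (intro allI impI)
      fix q assume q: "q < length (butlast r')"
      then have "r'!q = butlast r'!q" by (simp add: nth_butlast)
      moreover have "butlast r'!q < x" using bl q nth_mem by blast
      ultimately show "r'!q \<le> butlast r'!q \<and> (x \<le> r'!q \<longrightarrow> x < butlast r'!q)" by auto
    qed
    show ?thesis using T ri tabT m u x tr(1) by auto
  qed
next
  case (3 r' rs' i)
  have tr: "r' \<noteq> []" "sorted_wrt (<) r'" "tab rs'" "rs' \<noteq> [] \<Longrightarrow> domr r' (hd rs')"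
    using 3(2) by (auto simp: tab_Cons)
  have rs'ne: "rs' \<noteq> []" using 3(4) by auto
  obtain rs y where uy: "unrs rs' i = (rs, y)" by fastforce
  obtain r x' where ux: "unrow y r' = (r, x')" by fastforce
  have T: "T = r # rs" "x = x'" using 3(6) uy ux by auto
  have d: "distinct (concat rs')" using 3(3) by simp
  have IH: "rs_insert y rs = (rs', i) \<and> tab rs \<and> mset (concat rs') = add_mset y (mset (concat rs)) \<and> y \<in> set (hd rs')
   \<and> (rs \<noteq> [] \<longrightarrow> length (hd rs) \<le> length (hd rs') \<and>
        (\<forall>q<length (hd rs). hd rs'!q \<le> hd rs!q \<and> (y \<le> hd rs'!q \<longrightarrow> y < hd rs!q)))"
    using 3(1)[OF tr(3) d _ _ uy] 3(4,5) by auto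
  obtain p where p: "p < length (hd rs')" "hd rs'!p = y" using IH by (metis in_set_conv_nth)
  have dr: "domr r' (hd rs')" using tr(4) rs'ne by simp
  have zy: "r'!p < y" "r'!p \<in> set r'" using dr p by (auto simp: domr_def)
  have yr: "y \<notin> set r'"
  proof
    assume "y \<in> set r'"
    moreover have "y \<in> set (concat rs')" using IH rs'ne by (cases rs') auto
    ultimately show False using 3(3) by auto
  qed
  from unrow_correct[OF tr(2) yr zy(2) zy(1) ux] obtain j where
    U: "row_insert x' r = (r', Some y)" "sorted_wrt (<) r" "x' \<in> set r'" "x' < y"
       "j<length r'" "r'!j = x'" "r = r'[j:=y]" "\<forall>q<length r'. r'!q < y \<longrightarrow> q \<le> j" by blast
  have pj: "p \<le> j" using U(8) p dr zy by (auto simp: domr_def)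
  have sh: "sorted_wrt (<) (hd rs')" using 3(2) rs'ne by (cases rs') (auto simp: tab_Cons)
  have dom_r: "rs \<noteq> [] \<Longrightarrow> domr r (hd rs)"
  proof -
    assume ne: "rs \<noteq> []"
    have l: "length (hd rs) \<le> length r" using IH ne dr U(7) by (auto simp: domr_def)
    have "\<forall>q<length (hd rs). r!q < hd rs!q"
    proof (intro allI impI)
      fix q assume q: "q < length (hd rs)"
      then have q': "q < length (hd rs')" using IH ne by auto
      show "r!q < hd rs!q"
      proof (cases "q = j")
        case True
        have "y \<le> hd rs'!q"
          using pj True p q' sh by (metis le_less sorted_wrt_nth_less)
        then show ?thesis using IH ne q True U(5,7) by auto
      next
        case False
        then have "r!q = r'!q" using U(7) by simp
        also have "\<dots> < hd rs'!q" using dr q' by (auto simp: domr_def)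
        also have "\<dots> \<le> hd rs!q" using IH ne q by auto
        finally show ?thesis .
      qed
    qed
    then show "domr r (hd rs)" using l by (simp add: domr_def)
  qed
  have tabT: "tab T" using T U IH tr(1) dom_r by (auto simp: tab_Cons)
  have ri: "rs_insert x T = (r' # rs', Suc i)" using T U(1) IH by simp
  have mr: "mset r = add_mset y (mset r' - {#x'#})" using U(5,6,7) by (simp add: mset_update)
  have m: "mset (concat (r' # rs')) = add_mset x (mset (concat T))"
    using mr IH T U(3) by (simp add: insert_DiffM)
  have dis: "distinct r'" using tr(2) by (simp add: strict_sorted_iff)
  have u: "\<forall>q<length r. r'!q \<le> r!q \<and> (x' \<le> r'!q \<longrightarrow> x' < r!q)"
  proof (intro allI impI)
    fix q assume q: "q < length r"
    show "r'!q \<le> r!q \<and> (x' \<le> r'!q \<longrightarrow> x' < r!q)"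
    proof (cases "q = j")
      case True then show ?thesis using U q by simp
    next
      case False
      have "r'!q \<noteq> x'" using False U(5,6) q dis U(7) by (metis length_list_update nth_eq_iff_index_eq)
      then show ?thesis using False U(7) by auto
    qed
  qed
  show ?case using ri tabT m U(3,7) T u by simp
qed




lemma row_insert_inj:
  assumes s1: "sorted_wrt (<) r" and s2: "sorted_wrt (<) r2" and e: "row_insert x r = row_insert x2 r2"
  shows "x = x2 \<and> r = r2"
proof -
  obtain r' b where rb: "row_insert x r = (r', b)" by fastforce
  then have rb2: "row_insert x2 r2 = (r', b)" using e by simp
  show ?thesis
  proof (cases b)
    case None
    then show ?thesis using row_insert_None[OF rb[unfolded None]] row_insert_None[OF rb2[unfolded None]] by auto
  next
    case (Some y)
    from row_insert_Some[OF rb[unfolded Some]] obtain j where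
      j: "j<length r" "r!j = y" "x < y" "r' = r[j:=x]" "\<forall>q<j. \<not> x < r!q" by blast
    from row_insert_Some[OF rb2[unfolded Some]] obtain j2 where
      j2: "j2<length r2" "r2!j2 = y" "x2 < y" "r' = r2[j2:=x2]" "\<forall>q<j2. \<not> x2 < r2!q" by blast
    have len: "length r = length r2" using j(4) j2(4) by (metis length_list_update)
    consider "j = j2" | "j < j2" | "j2 < j" by linarith
    then show ?thesis
    proof cases
      case 1
      then have "x = x2" using j j2 by (metis nth_list_update_eq)
      moreover have "r = r2"
      proof -
        have "r = r'[j:=y]" using j by (metis list_update_id list_update_overwrite)
        also have "\<dots> = r2" using j2 1 by (metis list_update_id list_update_overwrite)
        finally show ?thesis .
      qed
      ultimately show ?thesis by simp
    next
      case 2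
      have "r'!j2 = r!j2" using j 2 by simp
      moreover have "r'!j2 = x2" using j2 by simp
      moreover have "r!j < r!j2" using s1 2 j2 len by (simp add: sorted_wrt_nth_less)
      ultimately show ?thesis using j j2 by simp
    next
      case 3
      have "r'!j = r2!j" using j2 3 by simp
      moreover have "r'!j = x" using j by simp
      moreover have "r2!j2 < r2!j" using s2 3 j len by (simp add: sorted_wrt_nth_less)
      ultimately show ?thesis using j j2 by simp
    qed
  qed
qed

lemma rs_insert_inj:
  "(\<forall>r\<in>set T. r \<noteq> [] \<and> sorted_wrt (<) r) \<Longrightarrow> (\<forall>r\<in>set T2. r \<noteq> [] \<and> sorted_wrt (<) r) \<Longrightarrow>
   rs_insert x T = rs_insert x2 T2 \<Longrightarrow> x = x2 \<and> T = T2"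
proof (induction T arbitrary: x x2 T2)
  case Nil
  show ?case
  proof (cases T2)
    case Nil then show ?thesis using Nil.prems by simp
  next
    case (Cons r2 rs2)
    obtain r' b where rb: "row_insert x2 r2 = (r', b)" by fastforce
    show ?thesis using Nil.prems Cons rb row_insert_None[of x2 r2]
      by (cases b) (auto split: prod.splits)
  qed
next
  case (Cons r rs)
  note prems = Cons.prems and IH = Cons.IH
  obtain r' b where rb: "row_insert x r = (r', b)" by fastforce
  show ?case
  proof (cases T2)
    case Nil
    then show ?thesis using prems rb row_insert_None[of x r]
      by (cases b) (auto split: prod.splits)
  next
    case (Cons r2 rs2)
    note Cons2 = Cons
    obtain r2' b2 where rb2: "row_insert x2 r2 = (r2', b2)" by fastforce
    show ?thesis
    proof (cases b)
      case None
      then show ?thesis using prems Cons2 rb rb2 row_insert_inj[of r r2 x x2]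
        by (cases b2) (auto split: prod.splits)
    next
      case (Some y)
      note S1 = Some
      obtain rs' i where ri: "rs_insert y rs = (rs', i)" by fastforce
      show ?thesis
      proof (cases b2)
        case None then show ?thesis using prems Cons2 rb rb2 S1 ri by auto
      next
        case (Some y2)
        note Some2 = Some
        obtain rs2' i2 where ri2: "rs_insert y2 rs2 = (rs2', i2)" by fastforce
        have eq: "r' = r2'" "rs' = rs2'" "i = i2" using prems Cons2 rb rb2 S1 Some2 ri ri2 by auto
        have e: "rs_insert y rs = rs_insert y2 rs2" using ri ri2 eq by simp
        have "y = y2 \<and> rs = rs2" using IH[OF _ _ e] prems Cons2 by auto
        moreover have "x = x2 \<and> r = r2"
          using row_insert_inj[of r r2 x x2] prems Cons2 rb rb2 S1 Some2 eq calculation by auto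
        ultimately show ?thesis using Cons2 by simp
      qed
    qed
  qed
qed

lemma bump_lemma:
  "(\<forall>r\<in>set T. sorted_wrt (<) r) \<Longrightarrow> distinct (concat T) \<Longrightarrow> x \<notin> set (concat T) \<Longrightarrow>
   y \<notin> set (concat T) \<Longrightarrow> x \<noteq> y \<Longrightarrow> rs_insert x T = (T1, r1) \<Longrightarrow> rs_insert y T1 = (T2, r2) \<Longrightarrow>
   (x < y \<longrightarrow> r2 \<le> r1) \<and> (y < x \<longrightarrow> r1 < r2)"
proof (induction T arbitrary: x y T1 r1 T2 r2)
  case Nil
  then show ?case by (auto split: if_splits prod.splits)
next
  case (Cons r rs)
  obtain r' b where rb: "row_insert x r = (r', b)" by fastforce
  have sr: "sorted_wrt (<) r" using Cons.prems by simp
  have xr: "x \<notin> set r" using Cons.prems by simp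
  have sr': "sorted_wrt (<) r'" using row_insert_sorted[OF sr xr] rb by simp
  show ?case
  proof (cases b)
    case None
    note N = row_insert_None[OF rb[unfolded None]]
    have T1: "T1 = r' # rs" "r1 = 0" using Cons.prems rb None by auto
    obtain r'' c where rc: "row_insert y r' = (r'', c)" by fastforce
    have r2: "r2 = (case c of None \<Rightarrow> 0 | Some _ \<Rightarrow> Suc (snd (rs_insert (the c) rs)))"
      using Cons.prems(7) T1 rc by (auto split: option.splits prod.splits)
    show ?thesis
    proof (intro conjI impI)
      assume "x < y"
      have "\<forall>z\<in>set r'. \<not> y < z" using N \<open>x < y\<close> by auto
      then have "c = None"
        using row_insert_app[of r' y "[]"] rc by auto
      then show "r2 \<le> r1" using r2 by simp
    next
      assume "y < x"
      have "c \<noteq> None"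
      proof
        assume "c = None"
        then show False using row_insert_None[of y r' r''] rc N \<open>y < x\<close> by auto
      qed
      then show "r1 < r2" using r2 T1 by (auto split: option.splits)
    qed
  next
    case (Some x1)
    from row_insert_Some[OF rb[unfolded Some]] obtain j where
      j: "j<length r" "r!j = x1" "x < x1" "r' = r[j:=x]" "\<forall>q<j. \<not> x < r!q" by blast
    obtain rs1 r1' where ri: "rs_insert x1 rs = (rs1, r1')" by fastforce
    have T1: "T1 = r' # rs1" "r1 = Suc r1'" using Cons.prems rb Some ri by auto
    obtain r'' c where rc: "row_insert y r' = (r'', c)" by fastforce
    have x1r: "x1 \<in> set r" using j by auto
    have ih_pre: "\<forall>r\<in>set rs. sorted_wrt (<) r" "distinct (concat rs)" "x1 \<notin> set (concat rs)"
      using Cons.prems x1r by auto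
    have y_rs: "y \<notin> set (concat rs)" using Cons.prems by simp
    have x_rs: "x \<notin> set (concat rs)" using Cons.prems by simp
    have rlt: "\<And>q. q < j \<Longrightarrow> r!q < x"
    proof -
      fix q assume q: "q < j"
      then have "\<not> x < r!q" "r!q \<in> set r" using j by auto
      then show "r!q < x" using xr by (cases "r!q = x") auto
    qed
    show ?thesis
    proof (intro conjI impI)
      assume "x < y"
      show "r2 \<le> r1"
      proof (cases c)
        case None
        then show ?thesis using Cons.prems(7) T1 rc by auto
      next
        case (Some y1)
        from row_insert_Some[OF rc[unfolded Some]] obtain j' where
          j': "j'<length r'" "r'!j' = y1" "y < y1" "r'' = r'[j':=y]" "\<forall>q<j'. \<not> y < r'!q" by blast
        have "j < j'"
        proof (rule ccontr)
          assume "\<not> j < j'"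
          then consider "j' = j" | "j' < j" by linarith
          then show False
          proof cases
            case 1 then show ?thesis using j j' \<open>x < y\<close> by simp
          next
            case 2
            then have "r'!j' = r!j'" using j by simp
            then show ?thesis using rlt[OF 2] j' \<open>x < y\<close> by simp
          qed
        qed
        then have y1: "y1 = r!j'" "x1 < y1" using j j' sr by (auto simp: sorted_wrt_nth_less)
        obtain T2' r2' where ri2: "rs_insert y1 rs1 = (T2', r2')" by fastforce
        have r2: "r2 = Suc r2'" using Cons.prems(7) T1 rc Some ri2 by auto
        have "y1 \<in> set r" using y1 j' j(4) by simp
        then have y1rs: "y1 \<notin> set (concat rs)" using Cons.prems(2) by auto
        have "r2' \<le> r1'" using Cons.IH[OF ih_pre y1rs _ ri ri2] y1 by auto
        then show ?thesis using r2 T1 by simp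
      qed
    next
      assume "y < x"
      show "r1 < r2"
      proof (cases c)
        case None
        have "x \<in> set r'" using j by (metis length_list_update nth_list_update_eq nth_mem)
        then show ?thesis using row_insert_None[of y r' r''] rc None \<open>y < x\<close> by auto
      next
        case (Some y1)
        from row_insert_Some[OF rc[unfolded Some]] obtain j' where
          j': "j'<length r'" "r'!j' = y1" "y < y1" "r'' = r'[j':=y]" "\<forall>q<j'. \<not> y < r'!q" by blast
        have "j' \<le> j"
        proof (rule ccontr)
          assume "\<not> j' \<le> j"
          then have "\<not> y < r'!j" using j' by simp
          then show False using j \<open>y < x\<close> by simp
        qed
        then have y1: "y1 < x1"
        proof (cases "j' = j")
          case True then show ?thesis using j j' by simp
        next
          case False
          then have "j' < j" using \<open>j' \<le> j\<close> by simp
          then show ?thesis using j j' sr by (auto simp: sorted_wrt_nth_less)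
        qed
        have y1set: "y1 \<in> set r'" using j' by auto
        have y1rs: "y1 \<notin> set (concat rs)"
        proof
          assume "y1 \<in> set (concat rs)"
          moreover have "y1 \<in> insert x (set r)" using y1set j(4) set_update_subset_insert by fastforce
          ultimately show False using Cons.prems(2) x_rs by auto
        qed
        obtain T2' r2' where ri2: "rs_insert y1 rs1 = (T2', r2')" by fastforce
        have r2: "r2 = Suc r2'" using Cons.prems(7) T1 rc Some ri2 by auto
        have "r1' < r2'" using Cons.IH[OF ih_pre y1rs _ ri ri2] y1 by auto
        then show ?thesis using r2 T1 by simp
      qed
    qed
  qed
qed




definition restr :: "nat \<Rightarrow> nat list list \<Rightarrow> nat list list" where
  "restr k T = filter (\<lambda>r. r \<noteq> []) (map (filter (\<lambda>z. z \<le> k)) T)"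

lemma filter_update_notP:
  "j < length xs \<Longrightarrow> \<not> P v \<Longrightarrow> \<not> P (xs!j) \<Longrightarrow> filter P (xs[j:=v]) = filter P xs"
  by (induction xs arbitrary: j) (auto split: nat.splits simp: nth_Cons)

lemma restr_big: "k < x \<Longrightarrow> restr k (fst (rs_insert x T)) = restr k T"
proof (induction x T rule: rs_insert.induct)
  case (1 x) then show ?case by (simp add: restr_def)
next
  case (2 x r rs)
  obtain r' b where rb: "row_insert x r = (r', b)" by fastforce
  show ?case
  proof (cases b)
    case None then show ?thesis using row_insert_None[OF rb[unfolded None]] rb 2(2) by (simp add: restr_def)
  next
    case (Some y)
    from row_insert_Some[OF rb[unfolded Some]] obtain j where
      j: "j<length r" "r!j = y" "x < y" "r' = r[j:=x]" by blast
    obtain rs' i where ri: "rs_insert y rs = (rs', i)" by fastforce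
    have ih: "restr k rs' = restr k rs" using 2(1)[OF rb[symmetric] Some] 2(2) j ri by simp
    have "filter (\<lambda>z. z \<le> k) r' = filter (\<lambda>z. z \<le> k) r"
      using filter_update_notP[of j r "\<lambda>z. z \<le> k" x] j 2(2) by simp
    then show ?thesis using rb Some ri ih by (simp add: restr_def)
  qed
qed

lemma tab_hd_less: "tab (r # rs) \<Longrightarrow> \<forall>s\<in>set rs. \<forall>z\<in>set s. hd r < z"
proof (induction rs arbitrary: r)
  case Nil then show ?case by simp
next
  case (Cons s rest)
  have d: "domr r s" "tab (s # rest)" "r \<noteq> []" "s \<noteq> []" "sorted_wrt (<) s" using Cons.prems by (auto simp: tab_Cons)
  have h: "hd r < hd s" using d by (auto simp: domr_def hd_conv_nth)
  have "\<forall>z\<in>set s. hd s \<le> z" using d(4,5) by (cases s) auto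
  then show ?case using Cons.IH[OF d(2)] h by fastforce
qed

lemma sorted_filter_le:
  fixes r :: "nat list"
  assumes "sorted_wrt (<) r"
  shows "filter (\<lambda>z. z \<le> k) r = takeWhile (\<lambda>z. z \<le> k) r \<and> (\<forall>z\<in>set (dropWhile (\<lambda>z. z \<le> k) r). k < z)"
proof -
  have s: "sorted_wrt (<) (dropWhile (\<lambda>z. z \<le> k) r)"
    using assms by (metis sorted_wrt_append takeWhile_dropWhile_id)
  have gt: "\<forall>z\<in>set (dropWhile (\<lambda>z. z \<le> k) r). k < z"
  proof (cases "dropWhile (\<lambda>z. z \<le> k) r")
    case Nil then show ?thesis by (simp only: Nil) simp
  next
    case (Cons w ws)
    then have "k < w" by (metis dropWhile_eq_Cons_conv not_le)
    then show ?thesis using s Cons by auto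
  qed
  have "filter (\<lambda>z. z \<le> k) r = filter (\<lambda>z. z \<le> k) (takeWhile (\<lambda>z. z \<le> k) r @ dropWhile (\<lambda>z. z \<le> k) r)"
    by simp
  also have "\<dots> = takeWhile (\<lambda>z. z \<le> k) r"
  proof -
    have "filter (\<lambda>z. z \<le> k) (dropWhile (\<lambda>z. z \<le> k) r) = []" using gt by (auto simp: filter_empty_conv)
    moreover have "filter (\<lambda>z. z \<le> k) (takeWhile (\<lambda>z. z \<le> k) r) = takeWhile (\<lambda>z. z \<le> k) r"
      by (rule filter_True) (auto dest: set_takeWhileD)
    ultimately show ?thesis by (simp only: filter_append) simp
  qed
  finally show ?thesis using gt by simp
qed

lemma restr_small:
  "tab T \<Longrightarrow> x \<le> k \<Longrightarrow> restr k (fst (rs_insert x T)) = fst (rs_insert x (restr k T))"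
proof (induction x T rule: rs_insert.induct)
  case (1 x) then show ?case by (simp add: restr_def)
next
  case (2 x r rs)
  have tr: "r \<noteq> []" "sorted_wrt (<) r" "tab rs" using 2(2) by (auto simp: tab_Cons)
  define s where "s = takeWhile (\<lambda>z. z \<le> k) r"
  define l where "l = dropWhile (\<lambda>z. z \<le> k) r"
  have rsl: "r = s @ l" by (simp add: s_def l_def)
  have fs: "filter (\<lambda>z. z \<le> k) r = s" and lk: "\<forall>z\<in>set l. k < z"
    using sorted_filter_le[OF tr(2), of k] by (auto simp: s_def l_def)
  have sk: "\<forall>z\<in>set s. z \<le> k" by (auto simp: s_def dest: set_takeWhileD)
  have restr_cons: "restr k (r # rs) = (if s = [] then restr k rs else s # restr k rs)"
    using fs by (simp add: restr_def)
  have fl: "filter (\<lambda>z. z \<le> k) l = []" using lk by (auto simp: filter_empty_conv)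
  have filt: "\<And>u. set u \<subseteq> {z. z \<le> k} \<Longrightarrow> filter (\<lambda>z. z \<le> k) (u @ l) = u"
    using fl by (auto intro!: filter_True)
  show ?case
  proof (cases "s = []")
    case True
    then have rl: "r = l" using rsl by simp
    then obtain y l' where yl: "r = y # l'" using tr(1) by (cases r) auto
    have ky: "k < y" using lk rl yl by (metis list.set_intros(1))
    have ri: "row_insert x r = (x # l', Some y)" using yl ky 2(3) by simp
    obtain rs' i where rsi: "rs_insert y rs = (rs', i)" by fastforce
    have "restr k rs' = restr k rs" using restr_big[OF ky, of rs] rsi by simp
    moreover have "restr k rs = []"
    proof -
      have "\<forall>s\<in>set rs. \<forall>z\<in>set s. k < z" using tab_hd_less[OF 2(2)] yl ky by fastforce
      then have "\<forall>s\<in>set rs. filter (\<lambda>z. z \<le> k) s = []" by (fastforce simp: filter_empty_conv)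
      then show ?thesis by (auto simp: restr_def filter_empty_conv)
    qed
    moreover have "filter (\<lambda>z. z \<le> k) (x # l') = [x]"
    proof -
      have "\<forall>z\<in>set l'. k < z" using lk rl yl by (metis list.set_intros(2))
      then have "filter (\<lambda>z. z \<le> k) l' = []" by (auto simp: filter_empty_conv)
      then show ?thesis using 2(3) by simp
    qed
    ultimately show ?thesis using ri rsi restr_cons True by (simp add: restr_def)
  next
    case False
    obtain s' b where sb: "row_insert x s = (s', b)" by fastforce
    show ?thesis
    proof (cases b)
      case (Some y)
      have ri: "row_insert x r = (s' @ l, Some y)" using row_insert_app_Some[OF sb[unfolded Some]] rsl by simp
      obtain j where j: "j<length s" "s!j = y" "s' = s[j:=x]" using row_insert_Some[OF sb[unfolded Some]] by blast
      have yk: "y \<le> k" using sk j by auto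
      have s'k: "set s' \<subseteq> {z. z \<le> k}" using j sk 2(3) set_update_subset_insert by fastforce
      have s'ne: "s' \<noteq> []" using j by auto
      obtain rs' i where rsi: "rs_insert y rs = (rs', i)" by fastforce
      have ih: "restr k rs' = fst (rs_insert y (restr k rs))"
        using 2(1)[OF ri[symmetric] refl tr(3) yk] rsi by simp
      show ?thesis using ri rsi ih restr_cons False sb Some filt[OF s'k] s'ne
        by (auto simp: restr_def split: prod.splits)
    next
      case None
      note N = row_insert_None[OF sb[unfolded None]]
      have fx: "filter (\<lambda>z. z \<le> k) ((s @ [x]) @ l) = s @ [x]" using filt[of "s @ [x]"] sk 2(3) by auto
      have rhs: "fst (rs_insert x (restr k (r # rs))) = (s @ [x]) # restr k rs"
        using restr_cons False sb None N by simp
      show ?thesis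
      proof (cases l)
        case Nil
        then have "row_insert x r = (s @ [x], None)" using rsl sb None N by simp
        then show ?thesis using rhs Nil rsl fx by (simp add: restr_def)
      next
        case (Cons y l')
        have ky: "k < y" using lk Cons by simp
        have "row_insert x r = (s @ x # l', Some y)"
          using row_insert_app[of s x l] N rsl Cons ky 2(3) by simp
        moreover obtain rs' i where rsi: "rs_insert y rs = (rs', i)" by fastforce
        moreover have "restr k rs' = restr k rs" using restr_big[OF ky, of rs] rsi by simp
        moreover have "filter (\<lambda>z. z \<le> k) (s @ x # l') = s @ [x]"
        proof -
          have "\<forall>z\<in>set l'. k < z" using lk Cons by simp
          then have "filter (\<lambda>z. z \<le> k) l' = []" by (auto simp: filter_empty_conv)
          moreover have "filter (\<lambda>z. z \<le> k) s = s" using sk by (auto intro: filter_True)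
          ultimately show ?thesis using 2(3) by simp
        qed
        ultimately show ?thesis using rhs by (simp add: restr_def)
      qed
    qed
  qed
qed




definition stp :: "nat \<Rightarrow> nat list list \<times> nat list list \<times> nat \<Rightarrow> nat list list \<times> nat list list \<times> nat" where
  "stp = (\<lambda>x (P, Q, j). (case rs_insert x P of (P', i) \<Rightarrow> (P', add_to_row (Suc j) i Q, Suc j)))"

definition stt :: "nat list \<Rightarrow> nat list list \<times> nat list list \<times> nat" where
  "stt w = fold stp w ([], [], 0)"

definition PP :: "nat list \<Rightarrow> nat list list" where "PP w = fst (stt w)"
definition QQ :: "nat list \<Rightarrow> nat list list" where "QQ w = fst (snd (stt w))"

lemma RS_stt0: "RS w = (case stt w of (P, Q, _) \<Rightarrow> (P, Q))"
  unfolding RS_def stt_def stp_def by (rule refl)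

lemma RS_stt: "RS w = (PP w, QQ w)"
  unfolding RS_stt0 PP_def QQ_def by (cases "stt w") simp

lemma RS_P_PP: "RS_P w = PP w" and RS_Q_QQ: "RS_Q w = QQ w"
  by (simp_all add: RS_P_def RS_Q_def RS_stt)

lemma stt_snoc: "stt (w @ [x]) = stp x (stt w)"
  by (simp add: stt_def)

lemma stt_len: "snd (snd (stt w)) = length w"
proof (induction w rule: rev_induct)
  case Nil then show ?case by (simp add: stt_def)
next
  case (snoc x w) then show ?case by (cases "stt w") (auto simp: stt_snoc stp_def split: prod.splits)
qed

lemma stt_eq: "stt w = (PP w, QQ w, length w)"
  using stt_len[of w] by (simp add: PP_def QQ_def prod_eq_iff)

lemma PP_Nil[simp]: "PP [] = []" and QQ_Nil[simp]: "QQ [] = []"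
  by (simp_all add: PP_def QQ_def stt_def)

lemma stt_snoc': "stt (w @ [x]) = (fst (rs_insert x (PP w)), add_to_row (Suc (length w)) (snd (rs_insert x (PP w))) (QQ w), Suc (length w))"
proof -
  have "stt (w @ [x]) = stp x (PP w, QQ w, length w)" using stt_snoc[of w x] stt_eq[of w] by simp
  then show ?thesis by (simp add: stp_def split: prod.splits)
qed

lemma PP_snoc: "PP (w @ [x]) = fst (rs_insert x (PP w))"
  unfolding PP_def[of "w @ [x]"] stt_snoc' by simp

lemma QQ_snoc: "QQ (w @ [x]) = add_to_row (Suc (length w)) (snd (rs_insert x (PP w))) (QQ w)"
  unfolding QQ_def[of "w @ [x]"] stt_snoc' by simp

lemma add_to_row_shape: "i \<le> length Q \<Longrightarrow> map length (add_to_row j i Q) = addcell i (map length Q)"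
  by (auto simp: add_to_row_def addcell_def map_update)

lemma add_to_row_set: "i \<le> length Q \<Longrightarrow> set (concat (add_to_row j i Q)) = insert j (set (concat Q))"
proof -
  assume "i \<le> length Q"
  show ?thesis
  proof (cases "i < length Q")
    case True
    have "set (concat (Q[i := Q!i @ [j]])) = insert j (set (concat Q))"
    proof -
      have "set (concat (Q[i := Q!i @ [j]])) = (\<Union>r\<in>set (Q[i := Q!i @ [j]]). set r)" by simp
      also have "\<dots> = insert j (\<Union>r\<in>set Q. set r)"
      proof
        show "(\<Union>r\<in>set (Q[i := Q!i @ [j]]). set r) \<subseteq> insert j (\<Union>r\<in>set Q. set r)"
          using set_update_subset_insert[of Q i "Q!i @ [j]"] True by fastforce
        show "insert j (\<Union>r\<in>set Q. set r) \<subseteq> (\<Union>r\<in>set (Q[i := Q!i @ [j]]). set r)"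
        proof
          fix z assume z: "z \<in> insert j (\<Union>r\<in>set Q. set r)"
          show "z \<in> (\<Union>r\<in>set (Q[i := Q!i @ [j]]). set r)"
          proof (cases "z = j")
            case True then show ?thesis using \<open>i < length Q\<close> by (auto intro!: bexI[of _ "Q!i @ [j]"] simp: set_update_memI)
          next
            case False
            then obtain r where r: "r \<in> set Q" "z \<in> set r" using z by auto
            then obtain q where q0: "q < length Q" "Q!q = r" by (auto simp: in_set_conv_nth)
            then have q: "q < length Q" "z \<in> set (Q!q)" using r by auto
            show ?thesis
            proof (cases "q = i")
              case True then show ?thesis using q \<open>i < length Q\<close> by (auto intro!: bexI[of _ "Q!i @ [j]"] simp: set_update_memI)
            next
              case False
              then have "Q[i := Q!i @ [j]] ! q = Q!q" by simp
              then have "Q!q \<in> set (Q[i := Q!i @ [j]])" using q by (metis length_list_update nth_mem)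
              then show ?thesis using q by auto
            qed
          qed
        qed
      qed
      finally show ?thesis by simp
    qed
    then show ?thesis using True by (simp add: add_to_row_def)
  next
    case False then show ?thesis by (simp add: add_to_row_def)
  qed
qed

definition rsinv :: "nat list \<Rightarrow> bool" where
  "rsinv w \<longleftrightarrow> tab (PP w) \<and> mset (concat (PP w)) = mset w \<and> map length (QQ w) = map length (PP w)
     \<and> set (concat (QQ w)) \<subseteq> {1..length w}"

lemma rsinv_all: "distinct w \<Longrightarrow> rsinv w"
proof (induction w rule: rev_induct)
  case Nil then show ?case by (simp add: rsinv_def)
next
  case (snoc x w)
  have iw: "rsinv w" using snoc by simp
  have dP: "distinct (concat (PP w))" using iw snoc.prems
    by (metis rsinv_def distinct_append mset_eq_imp_distinct_iff)
  have xP: "x \<notin> set (concat (PP w))" using iw snoc.prems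
    by (metis rsinv_def distinct_append mset_eq_setD disjoint_iff list.set_intros(1) set_append)
  obtain P' i where ri: "rs_insert x (PP w) = (P', i)" by fastforce
  have il: "i \<le> length (PP w)" using rs_insert_snd_le[of x "PP w"] ri by simp
  have ilQ: "i \<le> length (QQ w)" using il iw by (metis rsinv_def length_map)
  have t: "tab P'" using rs_insert_tab[OF _ dP xP] iw ri by (simp add: rsinv_def)
  have m: "mset (concat P') = mset (w @ [x])" using rs_insert_mset[of x "PP w"] ri iw by (simp add: rsinv_def)
  have sh: "map length P' = addcell i (map length (PP w))" using rs_insert_shape[of x "PP w"] ri by simp
  have shQ: "map length (add_to_row (Suc (length w)) i (QQ w)) = addcell i (map length (QQ w))"
    using add_to_row_shape[OF ilQ] by simp
  have sQ: "set (concat (add_to_row (Suc (length w)) i (QQ w))) \<subseteq> {1..length (w @ [x])}"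
    using add_to_row_set[OF ilQ] iw by (auto simp: rsinv_def)
  show ?case using t m sh shQ sQ iw ri by (simp add: rsinv_def PP_snoc QQ_snoc)
qed

lemma rsinv_distinct: "rsinv w \<Longrightarrow> distinct w \<Longrightarrow> distinct (concat (PP w))"
  by (metis rsinv_def mset_eq_imp_distinct_iff)

lemma decode_add_to_row:
  assumes "j \<notin> set (concat Q)" "j \<notin> set (concat Q')" "[] \<notin> set Q" "[] \<notin> set Q'"
    "i \<le> length Q" "i' \<le> length Q'" "add_to_row j i Q = add_to_row j i' Q'"
  shows "i = i' \<and> Q = Q'"
proof -
  have fQ: "\<And>Q i. j \<notin> set (concat Q) \<Longrightarrow> [] \<notin> set Q \<Longrightarrow> i \<le> length Q \<Longrightarrow>
     filter (\<lambda>r. r \<noteq> []) (map (filter (\<lambda>z. z \<noteq> j)) (add_to_row j i Q)) = Q"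
  proof -
    fix Q :: "nat list list" and i assume a: "j \<notin> set (concat Q)" "[] \<notin> set Q" "i \<le> length Q"
    have mQ: "map (filter (\<lambda>z. z \<noteq> j)) Q = Q"
      using a(1) by (induction Q) (auto intro: filter_True)
    have fQ': "filter (\<lambda>r. r \<noteq> []) Q = Q" using a(2) by (auto intro: filter_True)
    show "filter (\<lambda>r. r \<noteq> []) (map (filter (\<lambda>z. z \<noteq> j)) (add_to_row j i Q)) = Q"
    proof (cases "i < length Q")
      case True
      have "filter (\<lambda>z. z \<noteq> j) (Q!i @ [j]) = Q!i" using a(1) True
        by (auto intro!: filter_True)
      then have "map (filter (\<lambda>z. z \<noteq> j)) (Q[i := Q!i @ [j]]) = Q"
        using mQ True by (simp add: map_update)
      then show ?thesis using True fQ' by (simp add: add_to_row_def)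
    next
      case False then show ?thesis using mQ fQ' by (simp add: add_to_row_def)
    qed
  qed
  have QQ': "Q = Q'" using fQ[OF assms(1,3,5)] fQ[OF assms(2,4,6)] assms(7) by simp
  have "i = i'"
  proof (rule ccontr)
    assume ne: "i \<noteq> i'"
    consider "i < length Q" "i' < length Q" | "i < length Q" "i' = length Q" | "i = length Q" "i' < length Q"
      | "i = length Q" "i' = length Q" using assms(5,6) QQ' by (metis le_neq_implies_less)
    then show False
    proof cases
      case 1
      have "add_to_row j i Q ! i = Q!i @ [j]" "add_to_row j i' Q ! i = Q!i"
        using 1 ne by (simp_all add: add_to_row_def)
      then show ?thesis using assms(7) QQ' by (metis append_self_conv list.distinct(1) not_Cons_self2)
    next
      case 2
      then show ?thesis using assms(7) QQ' by (auto simp: add_to_row_def dest: arg_cong[where f=length])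
    next
      case 3
      then show ?thesis using assms(7) QQ' by (auto simp: add_to_row_def dest: arg_cong[where f=length])
    next
      case 4 then show ?thesis using ne by simp
    qed
  qed
  then show ?thesis using QQ' by simp
qed

lemma QQ_decode:
  assumes "distinct (w @ [x])" "distinct (v @ [y])" "length w = length v" "QQ (w @ [x]) = QQ (v @ [y])"
  shows "QQ w = QQ v \<and> snd (rs_insert x (PP w)) = snd (rs_insert y (PP v))"
proof -
  have iw: "rsinv w" "rsinv v" using assms rsinv_all by auto
  have ne0: "\<And>u. rsinv u \<Longrightarrow> [] \<notin> set (QQ u)"
  proof
    fix u assume iu: "rsinv u" and e: "[] \<in> set (QQ u)"
    then have "0 \<in> set (map length (QQ u))" by force
    then have "0 \<in> set (map length (PP u))" using iu unfolding rsinv_def by metis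
    then show False using iu by (auto simp: rsinv_def tab_def)
  qed
  have ne: "[] \<notin> set (QQ w)" "[] \<notin> set (QQ v)" using ne0 iw by auto
  have nj: "Suc (length w) \<notin> set (concat (QQ w))" "Suc (length w) \<notin> set (concat (QQ v))"
    using iw assms(3) by (auto simp: rsinv_def)
  have il: "snd (rs_insert x (PP w)) \<le> length (QQ w)" "snd (rs_insert y (PP v)) \<le> length (QQ v)"
    using rs_insert_snd_le iw by (metis rsinv_def length_map)+
  show ?thesis using decode_add_to_row[OF nj ne il] assms(3,4) by (simp add: QQ_snoc)
qed

lemma RS_inj:
  "distinct w \<Longrightarrow> distinct v \<Longrightarrow> length w = length v \<Longrightarrow> PP w = PP v \<Longrightarrow> QQ w = QQ v \<Longrightarrow> w = v"
proof (induction w arbitrary: v rule: rev_induct)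
  case Nil then show ?case by simp
next
  case (snoc x w)
  obtain v' y where v: "v = v' @ [y]" using snoc.prems(3) by (cases v rule: rev_cases) auto
  have l: "length w = length v'" using snoc.prems(3) v by simp
  have d: "QQ w = QQ v' \<and> snd (rs_insert x (PP w)) = snd (rs_insert y (PP v'))"
    using QQ_decode[of w x v' y] snoc.prems v l by simp
  have e: "rs_insert x (PP w) = rs_insert y (PP v')"
    using d snoc.prems(4) v by (simp add: PP_snoc prod_eq_iff)
  have tw: "tab (PP w)" "tab (PP v')" using rsinv_all snoc.prems v by (auto simp: rsinv_def)
  have "x = y \<and> PP w = PP v'" using rs_insert_inj[OF _ _ e] tw by (auto simp: tab_def)
  then show ?case using snoc.IH[of v'] snoc.prems v l d by simp
qed




lemma addcell_inj:
  assumes "addcell i a = addcell i b" "i \<le> length a" "i \<le> length b" "0 \<notin> set a" "0 \<notin> set b"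
  shows "a = b"
proof -
  consider "i < length a" "i < length b" | "i < length a" "i = length b" | "i = length a" "i < length b"
    | "i = length a" "i = length b" using assms(2,3) by (metis le_neq_implies_less)
  then show ?thesis
  proof cases
    case 1
    then have e: "a[i := Suc (a!i)] = b[i := Suc (b!i)]" using assms(1) by (simp add: addcell_def)
    then have l: "length a = length b" by (metis length_list_update)
    have ai: "a!i = b!i" using e 1 by (metis Suc_inject nth_list_update_eq)
    show ?thesis
    proof (rule nth_equalityI[OF l])
      fix q assume "q < length a"
      show "a!q = b!q"
      proof (cases "q = i")
        case True then show ?thesis using ai by simp
      next
        case False then show ?thesis using e by (metis nth_list_update_neq)
      qed
    qed
  next
    case 2
    then have e: "a[i := Suc (a!i)] = b @ [1]" using assms(1) by (simp add: addcell_def)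
    then have "length a = Suc (length b)" by (metis length_append_singleton length_list_update)
    then have "a[i := Suc (a!i)] ! i = 1" using e 2 by (simp add: nth_append)
    then have "a!i = 0" using 2 by simp
    then show ?thesis using assms(4) 2 by (metis nth_mem)
  next
    case 3
    then have e: "b[i := Suc (b!i)] = a @ [1]" using assms(1) by (simp add: addcell_def)
    then have "length b = Suc (length a)" by (metis length_append_singleton length_list_update)
    then have "b[i := Suc (b!i)] ! i = 1" using e 3 by (simp add: nth_append)
    then have "b!i = 0" using 3 by simp
    then show ?thesis using assms(5) 3 by (metis nth_mem)
  next
    case 4
    then show ?thesis using assms(1) by (simp add: addcell_def)
  qed
qed

lemma tab_shape_pos: "tab T \<Longrightarrow> 0 \<notin> set (map length T)"
  by (auto simp: tab_def)

lemma tab_shape_dec: "tab T \<Longrightarrow> Suc i < length T \<Longrightarrow> length (T!Suc i) \<le> length (T!i)"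
  by (auto simp: tab_def domr_def)

lemma RS_surj:
  "distinct w \<Longrightarrow> tab T \<Longrightarrow> distinct (concat T) \<Longrightarrow> map length T = map length (PP w) \<Longrightarrow>
   \<exists>v. PP v = T \<and> QQ v = QQ w \<and> length v = length w \<and> distinct v \<and> mset v = mset (concat T)"
proof (induction w arbitrary: T rule: rev_induct)
  case Nil
  then have "T = []" by simp
  then show ?case by (intro exI[of _ "[]"]) simp
next
  case (snoc x w)
  have dw: "distinct w" using snoc.prems by simp
  have iw: "rsinv w" using rsinv_all[OF dw] .
  obtain P' i where ri: "rs_insert x (PP w) = (P', i)" by fastforce
  have il: "i \<le> length (PP w)" using rs_insert_snd_le[of x "PP w"] ri by simp
  have shT: "map length T = addcell i (map length (PP w))"
    using snoc.prems(4) rs_insert_shape[of x "PP w"] ri by (simp add: PP_snoc)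
  have tw: "tab (PP w)" using iw by (simp add: rsinv_def)
  have lenT: "i < length T"
  proof -
    have "length T = length (addcell i (map length (PP w)))" using shT by (metis length_map)
    then show ?thesis using il by (auto simp: addcell_def)
  qed
  have corner: "Suc i < length T \<longrightarrow> length (T!Suc i) < length (T!i)"
  proof
    assume si: "Suc i < length T"
    have lT: "length T = length (addcell i (map length (PP w)))" using shT by (metis length_map)
    have ii: "Suc i < length (PP w)" using si lT il by (auto simp: addcell_def split: if_splits)
    have "length (T!Suc i) = map length T ! Suc i" "length (T!i) = map length T ! i" using si by auto
    then show "length (T!Suc i) < length (T!i)"
      using shT ii tab_shape_dec[OF tw ii] by (simp add: addcell_def)
  qed
  obtain T' x' where u: "unrs T i = (T', x')" by fastforce
  have U: "rs_insert x' T' = (T, i)" "tab T'" "mset (concat T) = add_mset x' (mset (concat T'))"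
    using unrs_correct[OF snoc.prems(2,3) lenT corner u] by auto
  have "mset (concat T) = mset (x' # concat T')" using U(3) by simp
  then have "distinct (x' # concat T')" using snoc.prems(3) mset_eq_imp_distinct_iff by blast
  then have dT': "distinct (concat T')" "x' \<notin> set (concat T')" by auto
  have il': "i \<le> length T'" using rs_insert_snd_le[of x' T'] U(1) by simp
  have sh2: "map length T = addcell i (map length T')" using rs_insert_shape[of x' T'] U(1) by simp
  have shT': "map length T' = map length (PP w)"
    using addcell_inj[of i "map length T'" "map length (PP w)"] sh2 shT il il' tab_shape_pos[OF U(2)] tab_shape_pos[OF tw]
    by simp
  obtain v' where v': "PP v' = T'" "QQ v' = QQ w" "length v' = length w" "distinct v'" "mset v' = mset (concat T')"
    using snoc.IH[OF dw U(2) dT'(1) shT'] by blast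
  have xv: "x' \<notin> set v'" using v'(5) dT'(2) by (metis mset_eq_setD set_mset_mset)
  show ?case
  proof (intro exI[of _ "v' @ [x']"] conjI)
    show "PP (v' @ [x']) = T" using v' U(1) by (simp add: PP_snoc)
    show "QQ (v' @ [x']) = QQ (w @ [x])" using v' U(1) ri by (simp add: QQ_snoc)
    show "length (v' @ [x']) = length (w @ [x])" using v' by simp
    show "distinct (v' @ [x'])" using v' xv by simp
    show "mset (v' @ [x']) = mset (concat T)" using v' U(3) by simp
  qed
qed

definition rw :: "nat list \<Rightarrow> nat \<Rightarrow> nat" where
  "rw w k = snd (rs_insert (w!k) (PP (take k w)))"

lemma rows_eq:
  "distinct w \<Longrightarrow> distinct v \<Longrightarrow> length w = length v \<Longrightarrow> QQ w = QQ v \<Longrightarrow> \<forall>k<length w. rw w k = rw v k"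
proof (induction w arbitrary: v rule: rev_induct)
  case Nil then show ?case by simp
next
  case (snoc x w)
  obtain v' y where v: "v = v' @ [y]" using snoc.prems(3) by (cases v rule: rev_cases) auto
  have l: "length w = length v'" using snoc.prems(3) v by simp
  have d: "QQ w = QQ v' \<and> snd (rs_insert x (PP w)) = snd (rs_insert y (PP v'))"
    using QQ_decode[of w x v' y] snoc.prems v l by simp
  have ih: "\<forall>k<length w. rw w k = rw v' k" using snoc.IH[of v'] snoc.prems v l d by simp
  show ?case
  proof (intro allI impI)
    fix k assume k: "k < length (w @ [x])"
    show "rw (w @ [x]) k = rw v k"
    proof (cases "k < length w")
      case True
      then have "rw (w @ [x]) k = rw w k" "rw (v' @ [y]) k = rw v' k" using l
        by (simp_all add: rw_def nth_append)
      then show ?thesis using ih True v by simp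
    next
      case False
      then have "k = length w" using k by simp
      then have kw: "k = length w" by simp
      have e1: "(w @ [x]) ! k = x" "take k (w @ [x]) = w" by (simp_all add: kw)
      have e2: "(v' @ [y]) ! k = y" "take k (v' @ [y]) = v'" using kw l by simp_all
      show ?thesis unfolding rw_def v e1 e2 using d by simp
    qed
  qed
qed

lemma nth_notin_take: "distinct w \<Longrightarrow> k \<le> m \<Longrightarrow> m < length w \<Longrightarrow> w!m \<notin> set (take k w)"
proof
  assume a: "distinct w" "k \<le> m" "m < length w" "w!m \<in> set (take k w)"
  have e: "drop k w ! (m - k) = w!m" using a(2,3) by simp
  have "m - k < length (drop k w)" using a(2,3) by simp
  then have "w!m \<in> set (drop k w)" using e by (metis nth_mem)
  then show False using set_take_disj_set_drop_if_distinct[OF a(1), of k k] a(4) by auto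
qed

lemma des_rw:
  assumes dw: "distinct w" and i: "1 \<le> i" "i < length w"
  shows "w!i < w!(i-1) \<longleftrightarrow> rw w (i-1) < rw w i"
proof -
  define T where "T = PP (take (i-1) w)"
  define x where "x = w!(i-1)"
  define y where "y = w!i"
  have i1: "i - 1 < length w" using i by simp
  have "take (Suc (i-1)) w = take (i-1) w @ [x]" using take_Suc_conv_app_nth[OF i1] by (simp add: x_def)
  then have ti: "take i w = take (i-1) w @ [x]" using i by simp
  obtain T1 r1 where r1: "rs_insert x T = (T1, r1)" by fastforce
  obtain T2 r2 where r2: "rs_insert y T1 = (T2, r2)" by fastforce
  have rw1: "rw w (i-1) = r1" using r1 by (simp add: rw_def T_def x_def)
  have "PP (take i w) = T1" using ti r1 by (simp add: PP_snoc T_def)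
  then have rw2: "rw w i = r2" using r2 by (simp add: rw_def y_def)
  have dt: "distinct (take (i-1) w)" using dw by simp
  have it: "rsinv (take (i-1) w)" using rsinv_all[OF dt] .
  have tT: "tab T" using it by (simp add: rsinv_def T_def)
  have dT: "distinct (concat T)" using rsinv_distinct[OF it dt] by (simp add: T_def)
  have sT: "set (concat T) = set (take (i-1) w)" using it unfolding rsinv_def T_def by (metis set_mset_mset)
  have xT: "x \<notin> set (concat T)" using sT nth_notin_take[OF dw, of "i-1" "i-1"] i by (simp add: x_def)
  have yT: "y \<notin> set (concat T)" using sT nth_notin_take[OF dw, of "i-1" i] i by (simp add: y_def)
  have xy: "x \<noteq> y" using dw i by (simp add: x_def y_def nth_eq_iff_index_eq)
  have b: "(x < y \<longrightarrow> r2 \<le> r1) \<and> (y < x \<longrightarrow> r1 < r2)"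
    using bump_lemma[OF _ dT xT yT xy r1 r2] tT by (auto simp: tab_def)
  show ?thesis using b xy rw1 rw2 by (auto simp: x_def y_def)
qed

lemma des_QQ:
  assumes "distinct w" "distinct v" "length w = length v" "QQ w = QQ v"
  shows "des w = des v"
proof -
  have re: "\<forall>k<length w. rw w k = rw v k" using rows_eq[OF assms] .
  have "\<And>i. 1 \<le> i \<Longrightarrow> i < length w \<Longrightarrow> (w!i < w!(i-1) \<longleftrightarrow> v!i < v!(i-1))"
  proof -
    fix i assume i: "1 \<le> i" "i < length w"
    have "w!i < w!(i-1) \<longleftrightarrow> rw w (i-1) < rw w i" using des_rw[OF assms(1) i] .
    also have "\<dots> \<longleftrightarrow> rw v (i-1) < rw v i" using re i by simp
    also have "\<dots> \<longleftrightarrow> v!i < v!(i-1)" using des_rw[OF assms(2)] i assms(3) by simp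
    finally show "w!i < w!(i-1) \<longleftrightarrow> v!i < v!(i-1)" .
  qed
  then show ?thesis using assms(3) unfolding des_def by auto
qed




lemma PP_filter: "distinct w \<Longrightarrow> PP (filter (\<lambda>z. z \<le> k) w) = restr k (PP w)"
proof (induction w rule: rev_induct)
  case Nil then show ?case by (simp add: restr_def)
next
  case (snoc x w)
  have dw: "distinct w" using snoc.prems by simp
  have tw: "tab (PP w)" using rsinv_all[OF dw] by (simp add: rsinv_def)
  show ?case
  proof (cases "x \<le> k")
    case True
    then have "PP (filter (\<lambda>z. z \<le> k) (w @ [x])) = fst (rs_insert x (PP (filter (\<lambda>z. z \<le> k) w)))"
      by (simp add: PP_snoc)
    also have "\<dots> = restr k (PP (w @ [x]))" using snoc.IH[OF dw] restr_small[OF tw True] by (simp add: PP_snoc)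
    finally show ?thesis .
  next
    case False
    then show ?thesis using snoc.IH[OF dw] restr_big[of k x "PP w"] by (simp add: PP_snoc)
  qed
qed

lemma tv_restr: "tableau_vertex T k = map length (restr k T)"
  by (induction T) (auto simp: tableau_vertex_def restr_def)

lemma rho_filter: "distinct w \<Longrightarrow> rho (filter (\<lambda>z. z \<le> k) w) = tableau_vertex (PP w) k"
  by (simp add: rho_def RS_P_PP PP_filter tv_restr)

lemma filter_prefix_takeWhile:
  "(\<forall>a b. a < b \<longrightarrow> b < length L \<longrightarrow> P (L!b) \<longrightarrow> P (L!a)) \<Longrightarrow> filter P L = takeWhile P L"
proof (induction L)
  case Nil then show ?case by simp
next
  case (Cons c L)
  show ?case
  proof (cases "P c")
    case True
    have "\<forall>a b. a < b \<longrightarrow> b < length L \<longrightarrow> P (L!b) \<longrightarrow> P (L!a)"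
    proof (intro allI impI)
      fix a b assume "a < b" "b < length L" "P (L!b)"
      then show "P (L!a)" using Cons.prems[rule_format, of "Suc a" "Suc b"] by simp
    qed
    then show ?thesis using Cons.IH True by simp
  next
    case False
    have "\<forall>z\<in>set L. \<not> P z"
    proof
      fix z assume "z \<in> set L"
      then obtain b where "b < length L" "L!b = z" by (auto simp: in_set_conv_nth)
      then show "\<not> P z" using Cons.prems[rule_format, of 0 "Suc b"] False by auto
    qed
    then show ?thesis using False by (simp add: filter_empty_conv)
  qed
qed

definition cnt :: "nat list \<Rightarrow> nat \<Rightarrow> nat" where
  "cnt L r = (if r < length L then L!r else 0)"

lemma cnt_filter_pos:
  assumes pre: "\<forall>a b. a < b \<longrightarrow> b < length L \<longrightarrow> 0 < L!b \<longrightarrow> 0 < L!a" and r: "r < length L"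
  shows "cnt (filter (\<lambda>l. 0 < l) L) r = L!r"
proof -
  have f: "filter (\<lambda>l. 0 < l) L = takeWhile (\<lambda>l. 0 < l) L" using filter_prefix_takeWhile[OF pre] .
  show ?thesis
  proof (cases "r < length (takeWhile (\<lambda>l. 0 < l) L)")
    case True then show ?thesis using f by (simp add: cnt_def takeWhile_nth)
  next
    case False
    define m where "m = length (takeWhile (\<lambda>l. 0 < l) L)"
    have m: "m \<le> r" "m < length L" using False r by (auto simp: m_def)
    have nm: "\<not> 0 < L!m" using nth_length_takeWhile[of "\<lambda>l. 0 < l" L] m by (simp add: m_def)
    have "L!r = 0"
    proof (rule ccontr)
      assume "L!r \<noteq> 0"
      then have "m \<noteq> r" using nm by auto
      then have "0 < L!m" using pre[rule_format, of m r] m r \<open>L!r \<noteq> 0\<close> by simp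
      then show False using nm by simp
    qed
    then show ?thesis using f False by (simp add: cnt_def)
  qed
qed

lemma tab_drop: "tab T \<Longrightarrow> tab (drop a T)"
  by (auto simp: tab_def dest: in_set_dropD)

lemma tab_first_col: "tab T \<Longrightarrow> a < b \<Longrightarrow> b < length T \<Longrightarrow> z \<in> set (T!b) \<Longrightarrow> hd (T!a) < z"
proof -
  assume a: "tab T" "a < b" "b < length T" "z \<in> set (T!b)"
  have d: "drop a T = T!a # drop (Suc a) T" using a by (simp add: Cons_nth_drop_Suc)
  have "tab (T!a # drop (Suc a) T)" using tab_drop[OF a(1), of a] d by simp
  moreover have "T!b \<in> set (drop (Suc a) T)"
  proof -
    have "drop (Suc a) T ! (b - Suc a) = T!b" using a by simp
    moreover have "b - Suc a < length (drop (Suc a) T)" using a by simp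
    ultimately show ?thesis by (metis nth_mem)
  qed
  ultimately show ?thesis using tab_hd_less a(4) by blast
qed

lemma tv_cnt:
  assumes t: "tab T" and r: "r < length T"
  shows "cnt (tableau_vertex T i) r = length (filter (\<lambda>z. z \<le> i) (T!r))"
proof -
  define L where "L = map (\<lambda>r. length (filter (\<lambda>x. x \<le> i) r)) T"
  have pre: "\<forall>a b. a < b \<longrightarrow> b < length L \<longrightarrow> 0 < L!b \<longrightarrow> 0 < L!a"
  proof (intro allI impI)
    fix a b assume ab: "a < b" "b < length L" "0 < L!b"
    have "0 < length (filter (\<lambda>x. x \<le> i) (T!b))" using ab by (simp add: L_def)
    then have "filter (\<lambda>x. x \<le> i) (T!b) \<noteq> []" by auto
    then obtain z where z: "z \<in> set (T!b)" "z \<le> i" by (auto simp: filter_empty_conv)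
    have "hd (T!a) < z" using tab_first_col[OF t ab(1) _ z(1)] ab by (simp add: L_def)
    moreover have "T!a \<noteq> []" using t ab by (auto simp: tab_def L_def)
    ultimately have "hd (T!a) \<in> set (filter (\<lambda>x. x \<le> i) (T!a))" using z by auto
    then have "filter (\<lambda>x. x \<le> i) (T!a) \<noteq> []" by (metis empty_iff list.set(1))
    then have "0 < length (filter (\<lambda>x. x \<le> i) (T!a))" by simp
    then show "0 < L!a" using ab by (simp add: L_def)
  qed
  have "tableau_vertex T i = filter (\<lambda>l. 0 < l) L" by (simp add: tableau_vertex_def L_def)
  then show ?thesis using cnt_filter_pos[OF pre] r by (simp add: L_def)
qed




lemma tv_full: "tab T \<Longrightarrow> set (concat T) \<subseteq> {..n} \<Longrightarrow> tableau_vertex T n = map length T"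
proof -
  assume a: "tab T" "set (concat T) \<subseteq> {..n}"
  have "map (filter (\<lambda>z. z \<le> n)) T = T"
    using a(2) by (induction T) (auto intro!: filter_True)
  moreover have "filter (\<lambda>r. r \<noteq> []) T = T" using a(1) by (auto simp: tab_def intro!: filter_True)
  ultimately show ?thesis by (simp add: tv_restr restr_def)
qed

lemma card_filter_step:
  fixes xs :: "nat list"
  assumes d: "distinct xs" and z: "1 \<le> z"
  shows "z \<in> set xs \<longleftrightarrow> length (filter (\<lambda>x. x \<le> z) xs) \<noteq> length (filter (\<lambda>x. x \<le> z - 1) xs)"
proof -
  have l1: "length (filter (\<lambda>x. x \<le> z) xs) = card ({x. x \<le> z} \<inter> set xs)" using distinct_length_filter[OF d] by simp
  have l2: "length (filter (\<lambda>x. x \<le> z - 1) xs) = card ({x. x \<le> z - 1} \<inter> set xs)" using distinct_length_filter[OF d] by simp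
  have u: "{x. x \<le> z} \<inter> set xs = ({x. x \<le> z - 1} \<inter> set xs) \<union> ({z} \<inter> set xs)" using z by auto
  show ?thesis
  proof (cases "z \<in> set xs")
    case True
    then have "{x. x \<le> z} \<inter> set xs = insert z ({x. x \<le> z - 1} \<inter> set xs)" using u by auto
    moreover have "z \<notin> {x. x \<le> z - 1} \<inter> set xs" using z by auto
    ultimately have "card ({x. x \<le> z} \<inter> set xs) = Suc (card ({x. x \<le> z - 1} \<inter> set xs))" by simp
    then show ?thesis using True l1 l2 by simp
  next
    case False
    then have "{x. x \<le> z} \<inter> set xs = {x. x \<le> z - 1} \<inter> set xs" using u by auto
    then show ?thesis using False l1 l2 by simp
  qed
qed

lemma tab_empty: "tab T \<Longrightarrow> set (concat T) = {} \<Longrightarrow> T = []"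
  by (cases T) (auto simp: tab_def)

lemma VI:
  assumes t1: "tab T1" and t2: "tab T2" and d1: "distinct (concat T1)" and d2: "distinct (concat T2)"
    and s1: "set (concat T1) = {1..n}" and s2: "set (concat T2) = {1..n}"
    and tv: "\<forall>i\<in>{1..n}. tableau_vertex T1 i = tableau_vertex T2 i"
  shows "T1 = T2"
proof (cases "n = 0")
  case True
  then show ?thesis using tab_empty[OF t1] tab_empty[OF t2] s1 s2 by simp
next
  case False
  have "tableau_vertex T1 n = map length T1" using tv_full[OF t1] s1 by auto
  moreover have "tableau_vertex T2 n = map length T2" using tv_full[OF t2] s2 by auto
  ultimately have len: "length T1 = length T2" using tv False by (metis atLeastAtMost_iff le_refl length_map less_one not_le)
  show ?thesis
  proof (rule nth_equalityI[OF len])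
    fix r assume r1: "r < length T1"
    then have r2: "r < length T2" using len by simp
    have row1: "T1!r \<in> set T1" using r1 by simp
    have row2: "T2!r \<in> set T2" using r2 by simp
    have sr1: "sorted_wrt (<) (T1!r)" "set (T1!r) \<subseteq> {1..n}" "distinct (T1!r)"
      using t1 row1 s1 d1 by (auto simp: tab_def strict_sorted_iff distinct_concat_iff)
    have sr2: "sorted_wrt (<) (T2!r)" "set (T2!r) \<subseteq> {1..n}" "distinct (T2!r)"
      using t2 row2 s2 d2 by (auto simp: tab_def strict_sorted_iff distinct_concat_iff)
    have c: "\<And>i. i \<le> n \<Longrightarrow> length (filter (\<lambda>z. z \<le> i) (T1!r)) = length (filter (\<lambda>z. z \<le> i) (T2!r))"
    proof -
      fix i assume i: "i \<le> n"
      show "length (filter (\<lambda>z. z \<le> i) (T1!r)) = length (filter (\<lambda>z. z \<le> i) (T2!r))"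
      proof (cases "i = 0")
        case True
        have "filter (\<lambda>z. z \<le> i) (T1!r) = []" "filter (\<lambda>z. z \<le> i) (T2!r) = []"
          using sr1(2) sr2(2) True by (auto simp: filter_empty_conv)
        then show ?thesis by simp
      next
        case False
        then have "i \<in> {1..n}" using i by simp
        then have "tableau_vertex T1 i = tableau_vertex T2 i" using tv by simp
        then show ?thesis using tv_cnt[OF t1 r1, of i] tv_cnt[OF t2 r2, of i] by simp
      qed
    qed
    have "set (T1!r) = set (T2!r)"
    proof
      show "set (T1!r) \<subseteq> set (T2!r)"
      proof
        fix z assume z: "z \<in> set (T1!r)"
        then have zn: "1 \<le> z" "z \<le> n" using sr1(2) by auto
        then show "z \<in> set (T2!r)"
          using z card_filter_step[OF sr1(3) zn(1)] card_filter_step[OF sr2(3) zn(1)] c[of z] c[of "z-1"] by simp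
      qed
    next
      show "set (T2!r) \<subseteq> set (T1!r)"
      proof
        fix z assume z: "z \<in> set (T2!r)"
        then have zn: "1 \<le> z" "z \<le> n" using sr2(2) by auto
        then show "z \<in> set (T1!r)"
          using z card_filter_step[OF sr1(3) zn(1)] card_filter_step[OF sr2(3) zn(1)] c[of z] c[of "z-1"] by simp
      qed
    qed
    then show "T1!r = T2!r"
      using sorted_distinct_set_unique sr1(1) sr2(1) by (metis strict_sorted_iff)
  qed
qed

lemma std_tab:
  assumes p: "is_partition_of n \<tau>" and s: "standard_tableau \<tau> P"
  shows "tab P \<and> distinct (concat P) \<and> set (concat P) = {1..n} \<and> map length P = \<tau>"
proof -
  have ml: "map length P = \<tau>" and cp: "concat P \<in> permutations_of_set {1..sum_list \<tau>}"
    and rs: "\<forall>r\<in>set P. sorted_wrt (<) r"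
    and col: "\<forall>i j. Suc i < length P \<and> j < length (P ! Suc i) \<longrightarrow> P ! i ! j < P ! Suc i ! j"
    using s by (auto simp: standard_tableau_def)
  have sn: "sum_list \<tau> = n" and pos: "\<forall>l\<in>set \<tau>. 0 < l" and dec: "sorted_wrt (\<ge>) \<tau>"
    using p by (auto simp: is_partition_of_def)
  have ne: "\<forall>r\<in>set P. r \<noteq> []" using pos ml by auto
  have d: "\<forall>i. Suc i < length P \<longrightarrow> domr (P!i) (P!Suc i)"
  proof (intro allI impI)
    fix i assume i: "Suc i < length P"
    have "\<tau>!Suc i \<le> \<tau>!i" using dec i ml sorted_wrt_nth_less[of "(\<ge>)" \<tau> i "Suc i"] by auto
    then have "length (P!Suc i) \<le> length (P!i)" using ml i by (metis Suc_lessD nth_map)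
    then show "domr (P!i) (P!Suc i)" using col i by (auto simp: domr_def)
  qed
  show ?thesis using ne rs d cp sn ml by (auto simp: tab_def permutations_of_set_def)
qed

lemma arr_filter:
  assumes a: "arrangement s"
  shows "1 \<le> k \<Longrightarrow> k \<le> n \<Longrightarrow> s k = filter (\<lambda>z. z \<le> k) (s n)"
proof -
  have perm: "\<And>k. 1 \<le> k \<Longrightarrow> s k \<in> permutations_of_set {1..k}" and er: "\<And>k. 2 \<le> k \<Longrightarrow> erase_max k (s k) = s (k - 1)"
    using a by (auto simp: arrangement_def)
  have "\<forall>k. n = k + d \<longrightarrow> 1 \<le> k \<longrightarrow> s k = filter (\<lambda>z. z \<le> k) (s n)" for d
  proof (induction d)
    case 0
    show ?case
    proof (intro allI impI)
      fix k assume k: "n = k + 0" "1 \<le> k"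
      have "set (s n) = {1..n}" using perm[of n] k by (simp add: permutations_of_set_def)
      then show "s k = filter (\<lambda>z. z \<le> k) (s n)" using k by (auto intro!: filter_True[symmetric])
    qed
  next
    case (Suc d)
    show ?case
    proof (intro allI impI)
      fix k assume k: "n = k + Suc d" "1 \<le> k"
      have ih: "s (Suc k) = filter (\<lambda>z. z \<le> Suc k) (s n)" using Suc.IH k by simp
      have "s k = erase_max (Suc k) (s (Suc k))" using er[of "Suc k"] k by simp
      also have "\<dots> = filter (\<lambda>z. z \<le> k) (s n)" using ih by (auto simp: erase_max_def intro: filter_cong)
      finally show "s k = filter (\<lambda>z. z \<le> k) (s n)" .
    qed
  qed
  then show "1 \<le> k \<Longrightarrow> k \<le> n \<Longrightarrow> s k = filter (\<lambda>z. z \<le> k) (s n)"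
    by (metis le_add_diff_inverse)
qed




lemma FC_le:
  fixes w :: "nat list \<Rightarrow> real" and n :: nat
  defines "S \<equiv> permutations_of_set {1..n}"
  assumes nn: "\<And>a. w a \<ge> 0"
    and H: "\<And>a b. a \<in> S \<Longrightarrow> b \<in> S \<Longrightarrow> QQ a = QQ b \<Longrightarrow> w a = w b"
    and t2: "tab P2" "distinct (concat P2)" "set (concat P2) = {1..n}"
    and sh: "map length P1 = map length P2"
  shows "(\<Sum>a\<in>{a\<in>S. PP a = P1}. w a) \<le> (\<Sum>a\<in>{a\<in>S. PP a = P2}. w a)"
proof -
  define A1 where "A1 = {a\<in>S. PP a = P1}"
  define A2 where "A2 = {a\<in>S. PP a = P2}"
  have ex: "\<forall>a\<in>A1. \<exists>v. v \<in> A2 \<and> QQ v = QQ a"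
  proof
    fix a assume a: "a \<in> A1"
    then have da: "distinct a" "set a = {1..n}" by (auto simp: A1_def S_def permutations_of_set_def)
    have "map length P2 = map length (PP a)" using a sh by (simp add: A1_def)
    then obtain v where v: "PP v = P2" "QQ v = QQ a" "length v = length a" "distinct v" "mset v = mset (concat P2)"
      using RS_surj[OF da(1) t2(1,2)] by blast
    have "set v = {1..n}" using v(5) t2(3) by (metis mset_eq_setD)
    then have "v \<in> A2" using v by (simp add: A2_def S_def permutations_of_set_def)
    then show "\<exists>v. v \<in> A2 \<and> QQ v = QQ a" using v by blast
  qed
  define \<psi> where "\<psi> a = (SOME v. v \<in> A2 \<and> QQ v = QQ a)" for a
  have psi: "\<And>a. a \<in> A1 \<Longrightarrow> \<psi> a \<in> A2 \<and> QQ (\<psi> a) = QQ a"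
  proof -
    fix a assume "a \<in> A1"
    then have "\<exists>v. v \<in> A2 \<and> QQ v = QQ a" using ex by blast
    then show "\<psi> a \<in> A2 \<and> QQ (\<psi> a) = QQ a" unfolding \<psi>_def by (rule someI_ex)
  qed
  have inj: "inj_on \<psi> A1"
  proof (rule inj_onI)
    fix a b assume ab: "a \<in> A1" "b \<in> A1" "\<psi> a = \<psi> b"
    then have "QQ a = QQ b" using psi by metis
    moreover have "PP a = PP b" using ab by (simp add: A1_def)
    moreover have "distinct a" "distinct b" using ab
      by (auto simp: A1_def S_def permutations_of_set_def)
    moreover have "length a = length b"
    proof -
      have "a \<in> S" "b \<in> S" using ab by (auto simp: A1_def)
      then show ?thesis unfolding S_def by (metis length_finite_permutations_of_set)
    qed
    ultimately show "a = b" using RS_inj by blast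
  qed
  have fin: "finite A2" by (simp add: A2_def S_def)
  have "(\<Sum>a\<in>A1. w a) = (\<Sum>a\<in>A1. w (\<psi> a))"
  proof (rule sum.cong[OF refl])
    fix a assume a: "a \<in> A1"
    then have "a \<in> S" "\<psi> a \<in> S" using psi by (auto simp: A1_def A2_def)
    then show "w a = w (\<psi> a)" using H psi a by metis
  qed
  also have "\<dots> = (\<Sum>a\<in>\<psi> ` A1. w a)" using sum.reindex[OF inj, of w] by simp
  also have "\<dots> \<le> (\<Sum>a\<in>A2. w a)"
    using psi nn fin by (intro sum_mono2) auto
  finally show ?thesis by (simp add: A1_def A2_def)
qed

lemma measure_sum:
  assumes pM: "prob_space M" and f: "f \<in> measurable M (count_space UNIV)" and A: "finite A"
  shows "measure M {\<omega>\<in>space M. f \<omega> \<in> A} = (\<Sum>a\<in>A. measure M {\<omega>\<in>space M. f \<omega> = a})"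
proof -
  have fm: "finite_measure M" using prob_space.finite_measure[OF pM] .
  have e: "{\<omega>\<in>space M. f \<omega> \<in> A} = (\<Union>a\<in>A. {\<omega>\<in>space M. f \<omega> = a})" by auto
  have sets: "(\<lambda>a. {\<omega>\<in>space M. f \<omega> = a}) ` A \<subseteq> sets M"
  proof
    fix X assume "X \<in> (\<lambda>a. {\<omega>\<in>space M. f \<omega> = a}) ` A"
    then obtain a where "X = {\<omega>\<in>space M. f \<omega> = a}" by auto
    moreover have "f -` {a} \<inter> space M \<in> sets M" using measurable_sets[OF f] by simp
    ultimately show "X \<in> sets M" by (simp add: Int_def vimage_def conj_commute)
  qed
  have disj: "disjoint_family_on (\<lambda>a. {\<omega>\<in>space M. f \<omega> = a}) A" by (auto simp: disjoint_family_on_def)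
  show ?thesis unfolding e using finite_measure.finite_measure_finite_Union[OF fm A sets disj] .
qed




theorem corollary29:
  fixes M :: "'a measure" and \<sigma> :: "nat \<Rightarrow> 'a \<Rightarrow> nat list"
  assumes "prob_space M"
    and "\<forall>k. \<sigma> k \<in> measurable M (count_space UNIV)"
    and "\<forall>\<omega>\<in>space M. arrangement (\<lambda>k. \<sigma> k \<omega>)"
    and "(\<forall>k \<alpha> \<beta>. \<alpha> \<in> permutations_of_set {1..k} \<and> \<beta> \<in> permutations_of_set {1..k}
              \<and> RS_Q \<alpha> = RS_Q \<beta> \<longrightarrow>
            measure M {\<omega> \<in> space M. \<sigma> k \<omega> = \<alpha>} = measure M {\<omega> \<in> space M. \<sigma> k \<omega> = \<beta>})
       \<or> (\<forall>k \<alpha> \<beta>. \<alpha> \<in> permutations_of_set {1..k} \<and> \<beta> \<in> permutations_of_set {1..k}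
              \<and> des \<alpha> = des \<beta> \<longrightarrow>
            measure M {\<omega> \<in> space M. \<sigma> k \<omega> = \<alpha>} = measure M {\<omega> \<in> space M. \<sigma> k \<omega> = \<beta>})"
  shows "\<forall>n \<tau> P1 P2. is_partition_of n \<tau> \<and> standard_tableau \<tau> P1 \<and> standard_tableau \<tau> P2 \<longrightarrow>
     measure M {\<omega> \<in> space M. map (\<lambda>i. rho (\<sigma> i \<omega>)) [1..<Suc n] = map (tableau_vertex P1) [1..<Suc n]}
   = measure M {\<omega> \<in> space M. map (\<lambda>i. rho (\<sigma> i \<omega>)) [1..<Suc n] = map (tableau_vertex P2) [1..<Suc n]}"
proof (intro allI impI)
  fix n \<tau> P1 P2
  assume asm: "is_partition_of n \<tau> \<and> standard_tableau \<tau> P1 \<and> standard_tableau \<tau> P2"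
  show "measure M {\<omega> \<in> space M. map (\<lambda>i. rho (\<sigma> i \<omega>)) [1..<Suc n] = map (tableau_vertex P1) [1..<Suc n]}
   = measure M {\<omega> \<in> space M. map (\<lambda>i. rho (\<sigma> i \<omega>)) [1..<Suc n] = map (tableau_vertex P2) [1..<Suc n]}"
  proof (cases "n = 0")
    case True then show ?thesis by simp
  next
    case False
    then have n1: "1 \<le> n" by simp
    define S where "S = permutations_of_set {1..n}"
    define w where "w \<alpha> = measure M {\<omega> \<in> space M. \<sigma> n \<omega> = \<alpha>}" for \<alpha>
    have Sn: "\<And>\<omega>. \<omega> \<in> space M \<Longrightarrow> \<sigma> n \<omega> \<in> S"
      using assms(3) n1 by (auto simp: arrangement_def S_def)
    have distS: "\<And>\<alpha>. \<alpha> \<in> S \<Longrightarrow> distinct \<alpha> \<and> set \<alpha> = {1..n}" by (auto simp: S_def permutations_of_set_def)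
    have path: "\<And>\<omega>. \<omega> \<in> space M \<Longrightarrow>
      map (\<lambda>i. rho (\<sigma> i \<omega>)) [1..<Suc n] = map (tableau_vertex (PP (\<sigma> n \<omega>))) [1..<Suc n]"
    proof -
      fix \<omega> assume om: "\<omega> \<in> space M"
      have arr: "arrangement (\<lambda>k. \<sigma> k \<omega>)" using assms(3) om by simp
      have d: "distinct (\<sigma> n \<omega>)" using distS Sn om by blast
      show "map (\<lambda>i. rho (\<sigma> i \<omega>)) [1..<Suc n] = map (tableau_vertex (PP (\<sigma> n \<omega>))) [1..<Suc n]"
      proof (rule map_cong[OF refl])
        fix i assume "i \<in> set [1..<Suc n]"
        then have i: "1 \<le> i" "i \<le> n" by auto
        have "\<sigma> i \<omega> = filter (\<lambda>z. z \<le> i) (\<sigma> n \<omega>)" using arr_filter[OF arr i] .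
        then show "rho (\<sigma> i \<omega>) = tableau_vertex (PP (\<sigma> n \<omega>)) i" using rho_filter[OF d] by simp
      qed
    qed
    have part: "is_partition_of n \<tau>" using asm by simp
    have key: "\<And>P. standard_tableau \<tau> P \<Longrightarrow>
      measure M {\<omega> \<in> space M. map (\<lambda>i. rho (\<sigma> i \<omega>)) [1..<Suc n] = map (tableau_vertex P) [1..<Suc n]}
        = (\<Sum>\<alpha>\<in>{\<alpha>\<in>S. PP \<alpha> = P}. w \<alpha>)"
    proof -
      fix P assume sP: "standard_tableau \<tau> P"
      have tP: "tab P" "distinct (concat P)" "set (concat P) = {1..n}" using std_tab[OF part sP] by auto
      have eqv: "\<And>\<alpha>. \<alpha> \<in> S \<Longrightarrow> map (tableau_vertex (PP \<alpha>)) [1..<Suc n] = map (tableau_vertex P) [1..<Suc n]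
          \<longleftrightarrow> PP \<alpha> = P"
      proof
        fix \<alpha> assume aS: "\<alpha> \<in> S" and e: "map (tableau_vertex (PP \<alpha>)) [1..<Suc n] = map (tableau_vertex P) [1..<Suc n]"
        have da: "distinct \<alpha>" "set \<alpha> = {1..n}" using distS aS by auto
        have ia: "rsinv \<alpha>" using rsinv_all[OF da(1)] .
        have t: "tab (PP \<alpha>)" "distinct (concat (PP \<alpha>))" "set (concat (PP \<alpha>)) = {1..n}"
          using ia rsinv_distinct[OF ia da(1)] da(2) unfolding rsinv_def by (metis set_mset_mset)+
        have tv: "\<forall>i\<in>{1..n}. tableau_vertex (PP \<alpha>) i = tableau_vertex P i"
        proof
          fix i assume "i \<in> {1..n}"
          then have "i \<in> set [1..<Suc n]" by auto
          then show "tableau_vertex (PP \<alpha>) i = tableau_vertex P i" using e by (metis map_eq_conv)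
        qed
        show "PP \<alpha> = P" using VI[OF t(1) tP(1) t(2) tP(2) t(3) tP(3) tv] .
      qed simp
      have "{\<omega> \<in> space M. map (\<lambda>i. rho (\<sigma> i \<omega>)) [1..<Suc n] = map (tableau_vertex P) [1..<Suc n]}
          = {\<omega> \<in> space M. \<sigma> n \<omega> \<in> {\<alpha>\<in>S. PP \<alpha> = P}}"
        using path eqv Sn by auto
      also have "measure M \<dots> = (\<Sum>\<alpha>\<in>{\<alpha>\<in>S. PP \<alpha> = P}. w \<alpha>)"
      proof -
        have fin: "finite {\<alpha>\<in>S. PP \<alpha> = P}" by (simp add: S_def)
        have m: "\<sigma> n \<in> measurable M (count_space UNIV)" using assms(2) by simp
        show ?thesis unfolding w_def by (rule measure_sum[OF assms(1) m fin])
      qed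
      finally show "measure M {\<omega> \<in> space M. map (\<lambda>i. rho (\<sigma> i \<omega>)) [1..<Suc n] = map (tableau_vertex P) [1..<Suc n]}
        = (\<Sum>\<alpha>\<in>{\<alpha>\<in>S. PP \<alpha> = P}. w \<alpha>)" .
    qed
    have H: "\<And>a b. a \<in> S \<Longrightarrow> b \<in> S \<Longrightarrow> QQ a = QQ b \<Longrightarrow> w a = w b"
    proof -
      fix a b assume ab: "a \<in> S" "b \<in> S" "QQ a = QQ b"
      show "w a = w b"
        using assms(4)
      proof
        assume h: "\<forall>k \<alpha> \<beta>. \<alpha> \<in> permutations_of_set {1..k} \<and> \<beta> \<in> permutations_of_set {1..k}
              \<and> RS_Q \<alpha> = RS_Q \<beta> \<longrightarrow>
            measure M {\<omega> \<in> space M. \<sigma> k \<omega> = \<alpha>} = measure M {\<omega> \<in> space M. \<sigma> k \<omega> = \<beta>}"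
        have "a \<in> permutations_of_set {1..n} \<and> b \<in> permutations_of_set {1..n} \<and> RS_Q a = RS_Q b"
          using ab by (simp add: S_def RS_Q_QQ)
        then show "w a = w b" unfolding w_def using h by blast
      next
        assume h: "\<forall>k \<alpha> \<beta>. \<alpha> \<in> permutations_of_set {1..k} \<and> \<beta> \<in> permutations_of_set {1..k}
              \<and> des \<alpha> = des \<beta> \<longrightarrow>
            measure M {\<omega> \<in> space M. \<sigma> k \<omega> = \<alpha>} = measure M {\<omega> \<in> space M. \<sigma> k \<omega> = \<beta>}"
        have "length a = length b" using ab unfolding S_def by (metis length_finite_permutations_of_set)
        then have "des a = des b" using des_QQ ab distS by blast
        then have "a \<in> permutations_of_set {1..n} \<and> b \<in> permutations_of_set {1..n} \<and> des a = des b"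
          using ab by (simp add: S_def)
        then show "w a = w b" unfolding w_def using h by blast
      qed
    qed
    have nn: "\<And>a. w a \<ge> 0" by (simp add: w_def)
    have sP1: "standard_tableau \<tau> P1" and sP2: "standard_tableau \<tau> P2" using asm by simp_all
    have t1: "tab P1" "distinct (concat P1)" "set (concat P1) = {1..n}" "map length P1 = \<tau>"
      using std_tab[OF part] asm by auto
    have t2: "tab P2" "distinct (concat P2)" "set (concat P2) = {1..n}" "map length P2 = \<tau>"
      using std_tab[OF part] asm by auto
    have H': "\<And>a b. a \<in> permutations_of_set {1..n} \<Longrightarrow> b \<in> permutations_of_set {1..n} \<Longrightarrow> QQ a = QQ b \<Longrightarrow> w a = w b"
      using H unfolding S_def by blast
    have sh12: "map length P1 = map length P2" and sh21: "map length P2 = map length P1" using t1(4) t2(4) by simp_all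
    have le1: "(\<Sum>a\<in>{a\<in>S. PP a = P1}. w a) \<le> (\<Sum>a\<in>{a\<in>S. PP a = P2}. w a)"
      unfolding S_def by (rule FC_le[where n=n, OF nn H' t2(1) t2(2) t2(3) sh12])
    have le2: "(\<Sum>a\<in>{a\<in>S. PP a = P2}. w a) \<le> (\<Sum>a\<in>{a\<in>S. PP a = P1}. w a)"
      unfolding S_def by (rule FC_le[where n=n, OF nn H' t1(1) t1(2) t1(3) sh21])
    have k1: "measure M {\<omega> \<in> space M. map (\<lambda>i. rho (\<sigma> i \<omega>)) [1..<Suc n] = map (tableau_vertex P1) [1..<Suc n]}
        = (\<Sum>\<alpha>\<in>{\<alpha>\<in>S. PP \<alpha> = P1}. w \<alpha>)" using key[OF sP1] .
    have k2: "measure M {\<omega> \<in> space M. map (\<lambda>i. rho (\<sigma> i \<omega>)) [1..<Suc n] = map (tableau_vertex P2) [1..<Suc n]}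
        = (\<Sum>\<alpha>\<in>{\<alpha>\<in>S. PP \<alpha> = P2}. w \<alpha>)" using key[OF sP2] .
    show ?thesis using k1 k2 le1 le2 by linarith
  qed
qed


end
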